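(* Let $\sigma>0$ and let $f=\sum_{n\in\mathbb N_0^d}a_{2n}(f)h_{2n}\in\mathcal H_{\flat_\sigma,even}(\mathbb R^d)$. Then $f|_{\mathbb R^d_+}\circ w\in\mathcal G_{\flat_\sigma}(\mathbb R^d_+)$, and $f|_{\mathbb R^d_+}\circ w=\sum_{n\in\mathbb N_0^d}b_nl_n$ with $\{b_n\}_{n\in\mathbb N_0^d}\in\ell_{\flat_\sigma}(\mathbb N_0^d)$ given by $$b_n=\frac{(-1)^{|n|}2^{|n|}}{\pi^{d/4}}\sum_{k\in\mathbb N_0^d}\binom{k-\mathbf{3/2}}{k}\frac{(-1)^{|k|}2^{|k|}(k+n)!\,a_{2(k+n)}(f)}{\sqrt{(2(k+n))!}},\quad n\in\mathbb N_0^d.$$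
   Context: $\mathbb R^d_+=(0,\infty)^d$; $w(x)=(\sqrt{x_1},\dots,\sqrt{x_d})$ for $x\in[0,\infty)^d$. Multi-indices: $|n|=\sum n_j$, $n!=\prod n_j!$, $2n=(2n_1,\dots,2n_d)$, $\mathbf{3/2}=(3/2,\dots,3/2)$, $\binom{\gamma}{m}=\prod_j\frac{\gamma_j(\gamma_j-1)\cdots(\gamma_j-m_j+1)}{m_j!}$. Laguerre functions $l_n(x)=\prod_jL_{n_j}(x_j)e^{-x_j/2}$ with $L_m(t)=\frac{e^t}{m!}\frac{d^m}{dt^m}(e^{-t}t^m)$; Hermite functions $h_n(x)=\prod_j(2^{n_j}n_j!\sqrt\pi)^{-1/2}e^{-x_j^2/2}H_{n_j}(x_j)$, $H_m(t)=(-1)^me^{t^2}\frac{d^m}{dt^m}e^{-t^2}$; Hermite coefficients $a_n(f)=\int_{\mathbb R^d}fh_n$. For $\tau>0$, $\ell_{\flat_\tau}(\mathbb N_0^d)$ is the set of complex sequences $\{a_n\}$ with $\sup_n|a_n|h^{|n|}n!^{1/(2\tau)}<\infty$ for some $h>0$. $\mathcal H_{\flat_\sigma}(\mathbb R^d)$ is the space of $\sum_na_nh_n$ with $\{a_n\}\in\ell_{\flat_\sigma}(\mathbb N_0^d)$, and $\mathcal H_{\flat_\sigma,even}(\mathbb R^d)$ its subspace of functions invariant under changing the sign of any single coordinate. $\mathcal G_{\flat_\sigma}(\mathbb R^d_+)$ is the space of functions $\sum_na_nl_n$ (absolutely convergent series) with $\{a_n\}\in\ell_{\flat_{\sigma/2}}(\mathbb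 N_0^d)$. *)

theory Defs
  imports "HOL-Analysis.Analysis"
begin

text \<open>Dimension d is encoded by a finite index type 'd (d = CARD('d)); points of R^d are
  real^'d, multi-indices in N_0^d are functions 'd => nat.\<close>

definition mabs :: "('d::finite \<Rightarrow> nat) \<Rightarrow> nat" where
  "mabs n = (\<Sum>j\<in>UNIV. n j)"

definition mfact :: "('d::finite \<Rightarrow> nat) \<Rightarrow> real" where
  "mfact n = (\<Prod>j\<in>UNIV. fact (n j))"

definition mbinom :: "('d::finite \<Rightarrow> real) \<Rightarrow> ('d \<Rightarrow> nat) \<Rightarrow> real" where
  "mbinom g m = (\<Prod>j\<in>UNIV. g j gchoose m j)"

definition laguerre_poly :: "nat \<Rightarrow> real \<Rightarrow> real" where
  "laguerre_poly m t = exp t / fact m * (deriv ^^ m) (\<lambda>s. exp (- s) * s ^ m) t"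

definition hermite_poly :: "nat \<Rightarrow> real \<Rightarrow> real" where
  "hermite_poly m t = (-1) ^ m * exp (t\<^sup>2) * (deriv ^^ m) (\<lambda>s. exp (- (s\<^sup>2))) t"

definition laguerre_fun :: "('d::finite \<Rightarrow> nat) \<Rightarrow> real ^ 'd \<Rightarrow> real" where
  "laguerre_fun n x = (\<Prod>j\<in>UNIV. laguerre_poly (n j) (x $ j) * exp (- (x $ j) / 2))"

definition hermite_fun :: "('d::finite \<Rightarrow> nat) \<Rightarrow> real ^ 'd \<Rightarrow> real" where
  "hermite_fun n x = (\<Prod>j\<in>UNIV. inverse (sqrt (2 ^ n j * fact (n j) * sqrt pi))
        * exp (- ((x $ j)\<^sup>2) / 2) * hermite_poly (n j) (x $ j))"

definition hermite_coeff :: "(real ^ 'd \<Rightarrow> complex) \<Rightarrow> ('d::finite \<Rightarrow> nat) \<Rightarrow> complex" where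
  "hermite_coeff f n = integral\<^sup>L lborel (\<lambda>x. f x * complex_of_real (hermite_fun n x))"

definition pos_orthant :: "(real ^ 'd) set" where
  "pos_orthant = {x. \<forall>j. 0 < x $ j}"

definition wmap :: "real ^ 'd \<Rightarrow> real ^ 'd" where
  "wmap x = (\<chi> j. sqrt (x $ j))"

definition ell_flat :: "real \<Rightarrow> (('d::finite \<Rightarrow> nat) \<Rightarrow> complex) set" where
  "ell_flat \<tau> = {a. \<exists>h>0. \<exists>C. \<forall>n. norm (a n) * h ^ mabs n * mfact n powr (1 / (2 * \<tau>)) \<le> C}"

definition H_flat :: "real \<Rightarrow> (real ^ 'd::finite \<Rightarrow> complex) set" where
  "H_flat \<sigma> = {f. \<exists>a\<in>ell_flat \<sigma>. \<forall>x.
      (\<lambda>n. norm (a n * complex_of_real (hermite_fun n x))) summable_on UNIV \<and>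
      ((\<lambda>n. a n * complex_of_real (hermite_fun n x)) has_sum f x) UNIV}"

definition H_flat_even :: "real \<Rightarrow> (real ^ 'd::finite \<Rightarrow> complex) set" where
  "H_flat_even \<sigma> = {f \<in> H_flat \<sigma>. \<forall>j x. f (\<chi> i. if i = j then - (x $ i) else x $ i) = f x}"

text \<open>G_{flat_sigma}(R^d_+): functions on the open positive orthant equal to an absolutely
  convergent series sum_n a_n l_n with a in l_{flat_{sigma/2}} (values off R^d_+ irrelevant).\<close>
definition G_flat :: "real \<Rightarrow> (real ^ 'd::finite \<Rightarrow> complex) set" where
  "G_flat \<sigma> = {g. \<exists>a\<in>ell_flat (\<sigma> / 2). \<forall>x\<in>pos_orthant.
      (\<lambda>n. norm (a n * complex_of_real (laguerre_fun n x))) summable_on UNIV \<and>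
      ((\<lambda>n. a n * complex_of_real (laguerre_fun n x)) has_sum g x) UNIV}"

end

theory Submission
  imports Defs "HOL-Computational_Algebra.Polynomial" "HOL-Probability.Distributions"
begin


primrec Hp :: "nat \<Rightarrow> real poly" where
  "Hp 0 = 1"
| "Hp (Suc n) = [:0,2:] * Hp n - pderiv (Hp n)"

declare Hp.simps(2)[simp del]

lemma Hp_deriv_fun:
  "(deriv ^^ m) (\<lambda>s. exp (- (s\<^sup>2))) = (\<lambda>s. (-1)^m * exp (- (s\<^sup>2)) * poly (Hp m) s)"
proof (induction m)
  case 0
  then show ?case by simp
next
  case (Suc m)
  have "(deriv ^^ Suc m) (\<lambda>s. exp (- (s\<^sup>2))) = deriv ((deriv ^^ m) (\<lambda>s. exp (- (s\<^sup>2))))"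
    by simp
  also have "\<dots> = (\<lambda>s. (-1)^(Suc m) * exp (- (s\<^sup>2)) * poly (Hp (Suc m)) s)"
  proof
    fix s :: real
    note Hp.simps(2)[simp]
    have "((\<lambda>s. (-1)^m * exp (- (s\<^sup>2)) * poly (Hp m) s) has_real_derivative
        (-1)^m * (exp (- (s\<^sup>2)) * (- (2 * s))) * poly (Hp m) s + (-1)^m * exp (- (s\<^sup>2)) * poly (pderiv (Hp m)) s) (at s)"
      by (auto intro!: derivative_eq_intros simp: power2_eq_square)
    moreover have "(-1)^m * (exp (- (s\<^sup>2)) * (- (2 * s))) * poly (Hp m) s + (-1)^m * exp (- (s\<^sup>2)) * poly (pderiv (Hp m)) s
        = (-1)^(Suc m) * exp (- (s\<^sup>2)) * poly (Hp (Suc m)) s"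
      by (simp add: algebra_simps)
    ultimately show "deriv ((deriv ^^ m) (\<lambda>s. exp (- (s\<^sup>2)))) s = (-1)^(Suc m) * exp (- (s\<^sup>2)) * poly (Hp (Suc m)) s"
      unfolding Suc.IH by (metis DERIV_imp_deriv)
  qed
  finally show ?case .
qed

lemma hermite_poly_Hp: "hermite_poly m t = poly (Hp m) t"
proof -
  have "hermite_poly m t = ((-1)^m * (-1)^m) * (exp (t\<^sup>2) * exp (- (t\<^sup>2))) * poly (Hp m) t"
    unfolding hermite_poly_def Hp_deriv_fun by (simp add: algebra_simps)
  also have "\<dots> = poly (Hp m) t"
    by (simp add: exp_minus field_simps flip: power_add)
  finally show ?thesis .
qed

lemma X2_mult: "[:0,2:] * p = pCons 0 (smult 2 p)"
  by (simp add: mult_pCons_left)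

lemma pderiv_Hp: "pderiv (Hp (Suc n)) = smult (2 * real (Suc n)) (Hp n)"
proof (induction n)
  case 0
  then show ?case by (simp add: pderiv_pCons Hp.simps)
next
  case (Suc n)
  have "pderiv (Hp (Suc (Suc n))) = pderiv ([:0,2:] * Hp (Suc n)) - pderiv (pderiv (Hp (Suc n)))"
    by (simp add: pderiv_diff Hp.simps(2)[of "Suc n"])
  also have "\<dots> = smult 2 (Hp (Suc n)) + [:0,2:] * pderiv (Hp (Suc n)) - pderiv (pderiv (Hp (Suc n)))"
    by (simp add: pderiv_mult pderiv_pCons pderiv_smult)
  also have "\<dots> = smult 2 (Hp (Suc n)) + smult (2 * real (Suc n)) ([:0,2:] * Hp n - pderiv (Hp n))"
  proof -
    have a: "pderiv (pderiv (Hp (Suc n))) = smult (2*real(Suc n)) (pderiv (Hp n))"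
      by (simp only: Suc pderiv_smult)
    have b: "[:0,2:] * pderiv (Hp (Suc n)) = smult (2*real(Suc n)) ([:0,2:] * Hp n)"
      by (simp only: Suc mult_smult_right)
    show ?thesis unfolding a b by (simp add: smult_diff_right)
  qed
  also have "\<dots> = smult 2 (Hp (Suc n)) + smult (2 * real (Suc n)) (Hp (Suc n))"
    by (simp only: Hp.simps(2)[of n])
  also have "\<dots> = smult (2 + 2 * real (Suc n)) (Hp (Suc n))"
    by (simp only: smult_add_left)
  also have "\<dots> = smult (2 * real (Suc (Suc n))) (Hp (Suc n))"
    by (simp add: algebra_simps)
  finally show ?case .
qed

lemma Hp_rec3: "Hp (Suc (Suc n)) = [:0,2:] * Hp (Suc n) - smult (2 * real (Suc n)) (Hp n)"
  using pderiv_Hp[of n] by (simp only: Hp.simps(2)[of "Suc n"])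

lemma coeff_X2: "coeff ([:0,2:] * p) j = (if j = 0 then 0 else 2 * coeff p (j - 1))"
  by (cases j) (simp_all add: X2_mult)

lemma coeff_Hp_aux: "(\<forall>j. (n < j \<or> odd (n + j)) \<longrightarrow> coeff (Hp n) j = 0) \<and>
   (\<forall>j. (Suc n < j \<or> odd (Suc n + j)) \<longrightarrow> coeff (Hp (Suc n)) j = 0)"
proof (induction n)
  case 0
  show ?case
  proof (intro conjI allI impI)
    fix j :: nat assume "0 < j \<or> odd (0 + j)"
    then show "coeff (Hp 0) j = 0" by (cases j) auto
  next
    fix j :: nat assume "Suc 0 < j \<or> odd (Suc 0 + j)"
    then show "coeff (Hp (Suc 0)) j = 0"
      by (cases j) (auto simp: coeff_X2 coeff_pderiv coeff_pCons Hp.simps split: nat.splits dest: odd_pos)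
  qed
next
  case (Suc n)
  show ?case
  proof (intro conjI allI impI)
    fix j assume "Suc n < j \<or> odd (Suc n + j)"
    then show "coeff (Hp (Suc n)) j = 0" using Suc by blast
  next
    fix j assume j: "Suc (Suc n) < j \<or> odd (Suc (Suc n) + j)"
    have "coeff (Hp (Suc (Suc n))) j = (if j = 0 then 0 else 2 * coeff (Hp (Suc n)) (j - 1))
       - 2 * real (Suc n) * coeff (Hp n) j"
      by (cases j) (simp_all add: Hp_rec3)
    also have "\<dots> = 0"
    proof (cases j)
      case 0
      then show ?thesis using Suc j by auto
    next
      case (Suc i)
      have "coeff (Hp (Suc n)) i = 0" using Suc.IH j \<open>j = Suc i\<close> by auto
      moreover have "coeff (Hp n) j = 0" using Suc.IH j \<open>j = Suc i\<close> by auto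
      ultimately show ?thesis using \<open>j = Suc i\<close> by simp
    qed
    finally show "coeff (Hp (Suc (Suc n))) j = 0" .
  qed
qed

lemma coeff_Hp_zero: "n < j \<or> odd (n + j) \<Longrightarrow> coeff (Hp n) j = 0"
  using coeff_Hp_aux by blast

lemma aux_alg1:
  fixes F G H P s A I :: real
  assumes "F > 0" "G > 0" "A \<ge> 0" "I \<ge> 0"
  shows "2 * (s * ((I + 2 * A + 2) * H) * P / ((A + 1) * F * G))
      - 2 * (I + 2 * A + 2) * (- s * H * (2 * P) / (F * ((I + 1) * G)))
      = s * ((I + 2 * A + 3) * (I + 2 * A + 2) * H) * (2 * P) / ((A + 1) * F * ((I + 1) * G))"
proof -
  define u where "u = s * H * P / (F * G)"
  have pa: "A + 1 > 0" "I + 1 > 0" using assms by auto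
  have t1: "2 * (s * ((I + 2 * A + 2) * H) * P / ((A + 1) * F * G)) = 2 * (I + 2 * A + 2) * u / (A + 1)"
    unfolding u_def by (simp add: field_simps)
  have t2: "2 * (I + 2 * A + 2) * (- s * H * (2 * P) / (F * ((I + 1) * G))) = - 4 * (I + 2 * A + 2) * u / (I + 1)"
    unfolding u_def by (simp add: field_simps) (simp add: diff_divide_distrib add_divide_distrib)
  have t3: "s * ((I + 2 * A + 3) * (I + 2 * A + 2) * H) * (2 * P) / ((A + 1) * F * ((I + 1) * G))
     = 2 * (I + 2 * A + 3) * (I + 2 * A + 2) * u / ((A + 1) * (I + 1))"
    unfolding u_def by (simp add: field_simps)
  have "2 * (I + 2 * A + 2) * u / (A + 1) - (- 4 * (I + 2 * A + 2) * u / (I + 1))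
     = 2 * (I + 2 * A + 3) * (I + 2 * A + 2) * u / ((A + 1) * (I + 1))"
    using pa by (simp add: field_simps)
  then show ?thesis unfolding t1 t2 t3 .
qed

lemma coeff_Hp_closed:
  "coeff (Hp (j + 2 * a)) j = (-1)^a * fact (j + 2 * a) * 2 ^ j / (fact a * fact j)"
proof (induction "j + 2 * a" arbitrary: j a rule: less_induct)
  case less
  show ?case
  proof (cases "j + 2 * a")
    case 0
    then show ?thesis by simp
  next
    case (Suc n1)
    show ?thesis
    proof (cases n1)
      case 0
      then have "j = 1" "a = 0" using Suc by presburger+
      then show ?thesis by (simp add: pderiv_pCons Hp.simps)
    next
      case (Suc m)
      have N: "j + 2 * a = Suc (Suc m)" using \<open>j + 2 * a = Suc n1\<close> Suc by simp
      have expand: "coeff (Hp (Suc (Suc m))) j = (if j = 0 then 0 else 2 * coeff (Hp (Suc m)) (j - 1))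
         - 2 * real (Suc m) * coeff (Hp m) j"
        by (cases j) (simp_all add: Hp_rec3)
      show ?thesis
      proof (cases j)
        case 0
        then obtain a' where a': "a = Suc a'" using N by (cases a) auto
        have m: "m = 0 + 2 * a'" using N 0 a' by simp
        have IH: "coeff (Hp m) 0 = (-1)^a' * fact m / fact a'"
          using less(1)[of 0 a'] m N by simp
        have "coeff (Hp (j + 2 * a)) j = - 2 * real (Suc m) * ((-1)^a' * fact m / fact a')"
          using expand IH N 0 by (simp add: field_simps)
        also have "\<dots> = (-1)^a * fact (j + 2 * a) * 2 ^ j / (fact a * fact j)"
        proof -
          have e1: "fact (j + 2 * a) = real (Suc (Suc m)) * real (Suc m) * fact m" using N by simp
          have e3: "fact a = real (Suc a') * fact a'" using a' by simp
          have e6: "(-1::real)^a = - ((-1)^a')" using a' by simp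
          have e7: "real (Suc (Suc m)) = 2 * real (Suc a')" using m by simp
          have nz: "fact a' \<noteq> (0::real)" "1 + real a' \<noteq> 0" "fact a' + fact a' * real a' \<noteq> 0"
          proof -
            have "fact a' + fact a' * real a' = fact a' * (1 + real a')" by (simp add: algebra_simps)
            then show "fact a' \<noteq> (0::real)" "1 + real a' \<noteq> 0" "fact a' + fact a' * real a' \<noteq> 0"
              by auto
          qed
          have "- 2 * real (Suc m) * ((-1)^a' * fact m / fact a') =
             - ((-1)^a') * (2 * real (Suc a') * real (Suc m) * fact m) / (real (Suc a') * fact a')"
            using nz by (simp add: field_simps)
          then show ?thesis unfolding e1 e3 e6 e7 using 0 by simp
        qed
        finally show ?thesis .
      next
        case (Suc i)
        have IH1: "coeff (Hp (Suc m)) i = (-1)^a * fact (Suc m) * 2 ^ i / (fact a * fact i)"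
          using less(1)[of i a] N Suc by simp
        show ?thesis
        proof (cases a)
          case 0
          have "coeff (Hp m) j = 0" using N 0 by (intro coeff_Hp_zero) simp
          then have "coeff (Hp (j + 2 * a)) j = 2 * ((-1)^a * fact (Suc m) * 2 ^ i / (fact a * fact i))"
            using expand IH1 N Suc by simp
          also have "\<dots> = (-1)^a * fact (j + 2 * a) * 2 ^ j / (fact a * fact j)"
            using 0 N Suc by simp
          finally show ?thesis .
        next
          case (Suc a')
          have m: "m = j + 2 * a'" using N Suc by simp
          have IH2: "coeff (Hp m) j = (-1)^a' * fact m * 2 ^ j / (fact a' * fact j)"
            using less(1)[of j a'] m N Suc by simp
          have "coeff (Hp (j + 2 * a)) j = 2 * ((-1)^a * fact (Suc m) * 2 ^ i / (fact a * fact i))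
              - 2 * real (Suc m) * ((-1)^a' * fact m * 2 ^ j / (fact a' * fact j))"
            using expand IH1 IH2 N \<open>j = Suc i\<close> by simp
          also have "\<dots> = (-1)^a * fact (j + 2 * a) * 2 ^ j / (fact a * fact j)"
          proof -
            have e1: "fact (j + 2 * a) = real (Suc (Suc m)) * real (Suc m) * fact m" using N by simp
            have e2: "fact (Suc m) = real (Suc m) * fact m" by simp
            have e3: "fact a = real (Suc a') * fact a'" using Suc by simp
            have e4: "fact j = real (Suc i) * fact i" using \<open>j = Suc i\<close> by simp
            have e5: "(2::real) ^ j = 2 * 2 ^ i" using \<open>j = Suc i\<close> by simp
            have e6: "(-1::real)^a = - ((-1)^a')" using Suc by simp
            have e7: "real (Suc (Suc m)) = real (Suc i) + 2 * real (Suc a')" using N Suc \<open>j = Suc i\<close> by simp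
            have m': "real m = real i + 2 * real a' + 1" using N Suc \<open>j = Suc i\<close> by simp
            have "2 * ((-1)^a * fact (Suc m) * 2 ^ i / (fact a * fact i))
              - 2 * real (Suc m) * ((-1)^a' * fact m * 2 ^ j / (fact a' * fact j)) =
              2 * ((-1)^a * ((real i + 2 * real a' + 2) * fact m) * 2^i / ((real a' + 1) * fact a' * fact i))
              - 2 * (real i + 2 * real a' + 2) * (- ((-1)^a) * fact m * (2 * 2^i) / (fact a' * ((real i + 1) * fact i)))"
              unfolding e2 e3 e4 e5 e6 using m' by (simp add: algebra_simps)
            also have "\<dots> = (-1)^a * ((real i + 2 * real a' + 3) * (real i + 2 * real a' + 2) * fact m) * (2 * 2^i)
                 / ((real a' + 1) * fact a' * ((real i + 1) * fact i))"
              by (rule aux_alg1) auto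
            also have "\<dots> = (-1)^a * fact (j + 2 * a) * 2 ^ j / (fact a * fact j)"
              unfolding e1 e3 e4 e5 using m' by (simp add: algebra_simps)
            finally show ?thesis .
          qed
          finally show ?thesis .
        qed
      qed
    qed
  qed
qed

lemma poly_sum_le:
  fixes p :: "real poly"
  assumes "degree p \<le> N"
  shows "poly p x = (\<Sum>j\<le>N. coeff p j * x ^ j)"
proof -
  have "poly p x = (\<Sum>j\<le>degree p. coeff p j * x ^ j)" by (rule poly_altdef)
  also have "\<dots> = (\<Sum>j\<le>N. coeff p j * x ^ j)"
    using assms by (intro sum.mono_neutral_left) (auto simp: coeff_eq_0)
  finally show ?thesis .
qed

lemma degree_Hp: "degree (Hp n) \<le> n"
  by (rule degree_le) (auto intro: coeff_Hp_zero)

lemma poly_Hp_minus: "poly (Hp n) (- t) = (-1)^n * poly (Hp n) t"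
proof -
  have "poly (Hp n) (- t) = (\<Sum>j\<le>n. coeff (Hp n) j * (- t) ^ j)"
    by (rule poly_sum_le[OF degree_Hp])
  also have "\<dots> = (\<Sum>j\<le>n. (-1)^n * (coeff (Hp n) j * t ^ j))"
  proof (rule sum.cong)
    fix j assume "j \<in> {..n}"
    show "coeff (Hp n) j * (- t) ^ j = (-1)^n * (coeff (Hp n) j * t ^ j)"
    proof (cases "odd (n + j)")
      case True then show ?thesis by (simp add: coeff_Hp_zero)
    next
      case False
      then have "(-1::real)^j = (-1)^n" by (metis even_add neg_one_even_power neg_one_odd_power)
      then show ?thesis by (simp add: power_minus[of t])
    qed
  qed simp
  also have "\<dots> = (-1)^n * poly (Hp n) t"
    by (simp add: poly_sum_le[OF degree_Hp] sum_distrib_left)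
  finally show ?thesis .
qed

lemma hermite_poly_minus: "hermite_poly n (- t) = (-1)^n * hermite_poly n t"
  by (simp add: hermite_poly_Hp poly_Hp_minus)




lemma feq: "b \<noteq> 0 \<Longrightarrow> d \<noteq> 0 \<Longrightarrow> a * d = c * b \<Longrightarrow> a / b = c / (d::real)"
  by (simp add: frac_eq_eq)

definition Tl :: "real poly \<Rightarrow> real poly" where "Tl p = pderiv p - p"

lemma lag_deriv_fun:
  "(deriv ^^ k) (\<lambda>s. exp (- s) * poly p s) = (\<lambda>s. exp (- s) * poly ((Tl ^^ k) p) s)"
proof (induction k)
  case 0
  then show ?case by simp
next
  case (Suc k)
  show ?case
  proof
    fix s :: real
    have "((\<lambda>s. exp (- s) * poly ((Tl ^^ k) p) s) has_real_derivative
        exp (- s) * (- 1) * poly ((Tl ^^ k) p) s + exp (- s) * poly (pderiv ((Tl ^^ k) p)) s) (at s)"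
      by (auto intro!: derivative_eq_intros)
    moreover have "exp (- s) * (- 1) * poly ((Tl ^^ k) p) s + exp (- s) * poly (pderiv ((Tl ^^ k) p)) s
        = exp (- s) * poly ((Tl ^^ Suc k) p) s"
      by (simp add: Tl_def algebra_simps)
    ultimately show "(deriv ^^ Suc k) (\<lambda>s. exp (- s) * poly p s) s = exp (- s) * poly ((Tl ^^ Suc k) p) s"
      using Suc.IH by (simp add: DERIV_imp_deriv)
  qed
qed

lemma laguerre_poly_Tl: "laguerre_poly m t = poly ((Tl ^^ m) (monom 1 m)) t / fact m"
proof -
  have eq: "(\<lambda>s::real. exp (- s) * s ^ m) = (\<lambda>s. exp (- s) * poly (monom 1 m) s)"
    by (simp add: poly_monom)
  have "laguerre_poly m t = exp t / fact m * (exp (- t) * poly ((Tl ^^ m) (monom 1 m)) t)"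
    unfolding laguerre_poly_def eq lag_deriv_fun by simp
  also have "\<dots> = poly ((Tl ^^ m) (monom 1 m)) t / fact m"
    by (simp add: exp_minus field_simps)
  finally show ?thesis .
qed

lemma coeff_Tl:
  "coeff ((Tl ^^ k) (monom 1 m)) j =
     (if j \<le> m then (-1)^(k+m+j) * real (k choose (m-j)) * fact m / fact j else 0)"
proof (induction k arbitrary: j)
  case 0
  show ?case
  proof (cases "j = m")
    case True then show ?thesis by (simp add: coeff_monom)
  next
    case False
    then show ?thesis by (auto simp: coeff_monom)
  qed
next
  case (Suc k)
  have c: "coeff ((Tl ^^ Suc k) (monom 1 m)) j =
      real (Suc j) * coeff ((Tl ^^ k) (monom 1 m)) (Suc j) - coeff ((Tl ^^ k) (monom 1 m)) j"
    by (simp add: Tl_def coeff_pderiv)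
  show ?case
  proof (cases "j < m")
    case True
    obtain r where r: "m - j = Suc r" using True by (metis Suc_diff_Suc)
    have r2: "m - Suc j = r" using r by simp
    have "coeff ((Tl ^^ Suc k) (monom 1 m)) j =
        real (Suc j) * ((-1)^(k+m+Suc j) * real (k choose r) * fact m / fact (Suc j))
        - (-1)^(k+m+j) * real (k choose Suc r) * fact m / fact j"
      unfolding c Suc.IH using True r r2 by simp
    also have "\<dots> = (-1)^(Suc k+m+j) * real (Suc k choose Suc r) * fact m / fact j"
    proof -
      have fj: "(fact (Suc j) :: real) = real (Suc j) * fact j" by simp
      have "real (Suc j) * ((-1)^(k+m+Suc j) * real (k choose r) * fact m / fact (Suc j))
          = (-1)^(k+m+Suc j) * real (k choose r) * fact m / fact j"
        unfolding fj by (simp del: of_nat_Suc)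
      then show ?thesis by (simp add: field_simps)
    qed
    finally show ?thesis using True r by simp
  next
    case False
    show ?thesis
    proof (cases "j = m")
      case True
      then show ?thesis unfolding c Suc.IH by simp
    next
      case False
      then show ?thesis unfolding c Suc.IH using \<open>\<not> j < m\<close> by simp
    qed
  qed
qed

lemma laguerre_poly_explicit:
  "laguerre_poly p t = (\<Sum>i\<le>p. (-1)^i * real (p choose i) / fact i * t^i)"
proof -
  have deg: "degree ((Tl ^^ p) (monom 1 p)) \<le> p"
    by (rule degree_le) (simp add: coeff_Tl)
  have "laguerre_poly p t = (\<Sum>i\<le>p. coeff ((Tl ^^ p) (monom 1 p)) i * t ^ i) / fact p"
    unfolding laguerre_poly_Tl poly_sum_le[OF deg] ..
  also have "\<dots> = (\<Sum>i\<le>p. (-1)^i * real (p choose i) / fact i * t^i)"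
    unfolding sum_divide_distrib
  proof (rule sum.cong)
    fix i assume i: "i \<in> {..p}"
    then have "(-1::real)^(p+p+i) = (-1)^i" by (simp add: power_add flip: power_mult_distrib)
    moreover have "p choose (p - i) = p choose i" using i by (simp add: binomial_symmetric[symmetric])
    ultimately show "coeff ((Tl ^^ p) (monom 1 p)) i * t ^ i / fact p = (-1)^i * real (p choose i) / fact i * t^i"
      using i by (simp add: coeff_Tl)
  qed simp
  finally show ?thesis .
qed

definition beta :: "nat \<Rightarrow> real" where "beta r = (real r - 3/2) gchoose r"

definition Sm :: "nat \<Rightarrow> nat \<Rightarrow> real" where "Sm m i = (\<Sum>q\<le>m. beta (m - q) * real (q choose i))"

lemma Sm_rec: "Sm (Suc m) (Suc i) = Sm m i + Sm m (Suc i)"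
proof -
  have "Sm (Suc m) (Suc i) = beta (Suc m) * real (0 choose Suc i) + (\<Sum>q\<le>m. beta (m - q) * real (Suc q choose Suc i))"
    unfolding Sm_def by (subst sum.atMost_Suc_shift) simp
  also have "\<dots> = (\<Sum>q\<le>m. beta (m - q) * real (q choose i)) + (\<Sum>q\<le>m. beta (m - q) * real (q choose Suc i))"
    by (simp add: algebra_simps sum.distrib)
  finally show ?thesis unfolding Sm_def .
qed

lemma Sm_closed: "i \<le> m \<Longrightarrow> Sm m i = (real m - 1/2) gchoose (m - i)"
proof (induction m arbitrary: i)
  case 0
  then show ?case by (simp add: Sm_def beta_def)
next
  case (Suc m)
  show ?case
  proof (cases i)
    case 0
    have "Sm (Suc m) 0 = (\<Sum>q\<le>Suc m. beta (Suc m - q))" by (simp add: Sm_def)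
    also have "\<dots> = (\<Sum>r\<le>Suc m. beta r)"
      by (rule sum.reindex_bij_witness[of _ "\<lambda>r. Suc m - r" "\<lambda>r. Suc m - r"]) auto
    also have "\<dots> = (\<Sum>r\<le>Suc m. ((- 3/2) + real r) gchoose r)"
      by (simp add: beta_def)
    also have "\<dots> = (- 3/2 + real (Suc m) + 1) gchoose (Suc m)"
      by (rule gbinomial_parallel_sum)
    also have "\<dots> = (real (Suc m) - 1/2) gchoose (Suc m - i)"
      using 0 by (simp add: algebra_simps)
    finally show ?thesis using 0 by simp
  next
    case (Suc i')
    show ?thesis
    proof (cases "i' = m")
      case True
      have "Sm m (Suc m) = 0" unfolding Sm_def by (intro sum.neutral) auto
      then show ?thesis using Suc True Sm_rec Suc.IH[of m] by simp
    next
      case False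
      then have i': "Suc i' \<le> m" using Suc.prems Suc by simp
      obtain k where k: "m - i' = Suc k" using i' by (metis Suc_diff_Suc Suc_le_lessD)
      have "Sm (Suc m) i = Sm m i' + Sm m (Suc i')" using Sm_rec Suc by simp
      also have "\<dots> = ((real m - 1/2) gchoose (Suc k)) + ((real m - 1/2) gchoose k)"
      proof -
        have "m - Suc i' = k" using k by simp
        then show ?thesis using Suc.IH[of i'] Suc.IH[of "Suc i'"] i' k by simp
      qed
      also have "\<dots> = ((real m - 1/2) + 1) gchoose (Suc k)"
        by (metis gbinomial_Suc_Suc add.commute)
      also have "\<dots> = (real (Suc m) - 1/2) gchoose (Suc m - i)"
        using Suc k by (simp add: algebra_simps)
      finally show ?thesis .
    qed
  qed
qed

lemma aux_alg2:
  fixes A R X Y :: real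
  assumes "A \<ge> 0" "R \<ge> 0" "Y > 0"
  shows "(A - 1/2 + 1) / (R + 1) * (X / Y) = (2*A+2)*(2*A+1)*X / (4 * Y * (A+1) * (R+1))"
proof -
  have p: "A + 1 > 0" "R + 1 > 0" "1 + A > 0" "1 + R > 0" using assms by auto
  have "(2*A+2)*(2*A+1)*X / (4 * Y * (A+1) * (R+1)) = ((2*A+1)*X) / (2 * Y * (R+1))"
  proof -
    have n1: "4 * Y * (A+1) * (R+1) \<noteq> 0" "2 * Y * (R+1) \<noteq> 0" using p assms by auto
    show ?thesis by (rule feq[OF n1]) (simp add: algebra_simps)
  qed
  also have "\<dots> = (A - 1/2 + 1) / (R + 1) * (X / Y)"
    by (simp add: field_simps)
  finally show ?thesis by simp
qed

lemma G_closed: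
  "(real (i + r) - 1/2) gchoose r = fact (2*(i+r)) * fact i / (4^r * fact (i+r) * fact (2*i) * fact r)"
proof (induction r)
  case 0
  then show ?case by simp
next
  case (Suc r)
  have "(real (i + Suc r) - 1/2) gchoose (Suc r) = ((real (i + r) - 1/2) + 1) gchoose (Suc r)"
    by (simp add: algebra_simps)
  also have "\<dots> = ((real (i + r) - 1/2) + 1) / real (Suc r) * ((real (i + r) - 1/2) gchoose r)"
    by (rule gbinomial_factors)
  also have "\<dots> = ((real (i + r) - 1/2) + 1) / real (Suc r) *
      (fact (2*(i+r)) * fact i / (4^r * fact (i+r) * fact (2*i) * fact r))"
    unfolding Suc ..
  also have "\<dots> = fact (2*(i+Suc r)) * fact i / (4^Suc r * fact (i+Suc r) * fact (2*i) * fact (Suc r))"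
  proof -
    have e1: "fact (2*(i+Suc r)) = (2 * real (i+r) + 2) * (2 * real (i + r) + 1) * (fact (2*(i+r)) :: real)"
      by (simp add: algebra_simps)
    have e2: "fact (i + Suc r) = (real (i+r) + 1) * (fact (i+r) :: real)" by simp
    have e3: "fact (Suc r) = (real r + 1) * (fact r :: real)" by simp
    have Y: "4^r * fact (i+r) * fact (2*i) * fact r > (0::real)" by auto
    have "((real (i + r) - 1/2) + 1) / real (Suc r) *
      (fact (2*(i+r)) * fact i / (4^r * fact (i+r) * fact (2*i) * fact r))
      = (2*real (i+r)+2)*(2*real (i+r)+1)*(fact (2*(i+r)) * fact i) / (4 * (4^r * fact (i+r) * fact (2*i) * fact r) * (real (i+r)+1) * (real r+1))"
      using aux_alg2[OF _ _ Y, of "real (i+r)" "real r" "fact (2*(i+r)) * fact i"] by (simp only: of_nat_Suc add.commute)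
    also have "\<dots> = fact (2*(i+Suc r)) * fact i / (4^Suc r * fact (i+Suc r) * fact (2*i) * fact (Suc r))"
      unfolding e1 e2 e3 by (simp add: ac_simps)
    finally show ?thesis .
  qed
  finally show ?case .
qed

lemma sum_split_even_odd:
  fixes g :: "nat \<Rightarrow> real"
  shows "(\<Sum>j\<le>2*m. g j) = (\<Sum>i\<le>m. g (2*i)) + (\<Sum>i<m. g (2*i+1))"
proof (induction m)
  case 0 then show ?case by simp
next
  case (Suc m)
  have "(\<Sum>j\<le>2*Suc m. g j) = (\<Sum>j\<le>2*m. g j) + g (2*m+1) + g (2*m+2)"
    by (simp add: algebra_simps)
  then show ?case using Suc by simp
qed

lemma hermite_even_sqrt:
  assumes "t \<ge> 0"
  shows "hermite_poly (2*m) (sqrt t) = (\<Sum>i\<le>m. coeff (Hp (2*m)) (2*i) * t^i)"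
proof -
  have "hermite_poly (2*m) (sqrt t) = (\<Sum>j\<le>2*m. coeff (Hp (2*m)) j * sqrt t ^ j)"
    unfolding hermite_poly_Hp by (rule poly_sum_le[OF degree_Hp])
  also have "\<dots> = (\<Sum>i\<le>m. coeff (Hp (2*m)) (2*i) * sqrt t ^ (2*i)) + (\<Sum>i<m. coeff (Hp (2*m)) (2*i+1) * sqrt t ^ (2*i+1))"
    by (rule sum_split_even_odd)
  also have "(\<Sum>i<m. coeff (Hp (2*m)) (2*i+1) * sqrt t ^ (2*i+1)) = 0"
    by (intro sum.neutral) (auto intro!: coeff_Hp_zero)
  also have "(\<Sum>i\<le>m. coeff (Hp (2*m)) (2*i) * sqrt t ^ (2*i)) = (\<Sum>i\<le>m. coeff (Hp (2*m)) (2*i) * t^i)"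
    using assms by (simp add: power_mult)
  finally show ?thesis by simp
qed

lemma coeff_identity_aux:
  fixes F Fr F2i Fi Fir :: real
  assumes "Fr > 0" "F2i > 0" "Fi > 0" "Fir > 0"
  shows "(-1::real)^r * F * 4^i / (Fr * F2i) =
   (-1)^(i+r) * 4^i * 4^r * Fir * ((-1)^i / Fi * (F * Fi / (4^r * Fir * F2i * Fr)))"
proof -
  have sg: "(-1::real)^(i+r) * (-1)^i = (-1)^r" by (simp add: power_add flip: power_mult)
  have "(-1)^(i+r) * 4^i * 4^r * Fir * ((-1)^i / Fi * (F * Fi / (4^r * Fir * F2i * Fr)))
     = ((-1)^(i+r) * (-1)^i) * 4^i * F * (4^r * Fir * Fi) / ((4^r * Fir * Fi) * (Fr * F2i))"
    by (simp add: ac_simps)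
  also have "\<dots> = (-1)^r * F * 4^i / (Fr * F2i)"
    using assms unfolding sg by simp
  finally show ?thesis by simp
qed

lemma coeff_identity:
  assumes "i \<le> m"
  shows "coeff (Hp (2*m)) (2*i) = (-4)^m * fact m * ((-1)^i / fact i * Sm m i)"
proof -
  obtain r where m: "m = i + r" using assms le_Suc_ex by blast
  have c: "coeff (Hp (2*m)) (2*i) = (-1)^r * fact (2*(i+r)) * 4^i / (fact r * fact (2*i))"
  proof -
    have "(2::real)^(2*i) = 4^i" by (simp add: power_mult)
    then show ?thesis using coeff_Hp_closed[of "2*i" r] m by (simp add: algebra_simps)
  qed
  have s: "Sm m i = fact (2*(i+r)) * fact i / (4^r * fact (i+r) * fact (2*i) * fact r)"
    using Sm_closed[OF assms] G_closed[of i r] m by simp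
  have p4: "(-4::real)^m = (-1)^(i+r) * 4^i * 4^r" unfolding m by (simp add: power_minus[of 4] power_add)
  show ?thesis unfolding c s p4 unfolding m
    by (rule coeff_identity_aux) auto
qed

lemma key_identity:
  assumes "t \<ge> 0"
  shows "hermite_poly (2*m) (sqrt t) = (-4)^m * fact m * (\<Sum>q\<le>m. beta (m-q) * laguerre_poly q t)"
proof -
  have "(\<Sum>q\<le>m. beta (m-q) * laguerre_poly q t) = (\<Sum>q\<le>m. \<Sum>i\<le>m. beta (m-q) * ((-1)^i * real (q choose i) / fact i * t^i))"
  proof (rule sum.cong)
    fix q assume q: "q \<in> {..m}"
    have "laguerre_poly q t = (\<Sum>i\<le>m. (-1)^i * real (q choose i) / fact i * t^i)"
      unfolding laguerre_poly_explicit using q by (intro sum.mono_neutral_left) auto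
    then show "beta (m-q) * laguerre_poly q t = (\<Sum>i\<le>m. beta (m-q) * ((-1)^i * real (q choose i) / fact i * t^i))"
      by (simp add: sum_distrib_left)
  qed simp
  also have "\<dots> = (\<Sum>i\<le>m. \<Sum>q\<le>m. beta (m-q) * ((-1)^i * real (q choose i) / fact i * t^i))"
    by (rule sum.swap)
  also have "\<dots> = (\<Sum>i\<le>m. ((-1)^i / fact i * Sm m i) * t^i)"
    unfolding Sm_def by (simp add: sum_distrib_left sum_distrib_right algebra_simps)
  finally have "(-4)^m * fact m * (\<Sum>q\<le>m. beta (m-q) * laguerre_poly q t) =
      (\<Sum>i\<le>m. ((-4)^m * fact m * ((-1)^i / fact i * Sm m i)) * t^i)"
    by (simp add: sum_distrib_left algebra_simps)
  also have "\<dots> = (\<Sum>i\<le>m. coeff (Hp (2*m)) (2*i) * t^i)"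
    by (intro sum.cong) (simp_all add: coeff_identity)
  finally show ?thesis using hermite_even_sqrt[OF assms] by simp
qed




definition Mm :: "nat \<Rightarrow> real" where
  "Mm j = (if even j then sqrt pi * fact j / (2^j * fact (j div 2)) else 0)"

lemma Mm_int: "has_bochner_integral lborel (\<lambda>x. exp (- (x\<^sup>2)) * x ^ j) (Mm j)"
proof (cases "even j")
  case True
  then obtain k where k: "j = 2 * k" by blast
  have "has_bochner_integral lborel (\<lambda>x. exp (-x\<^sup>2)*x^(2 * k))
      (sqrt pi * (fact (2 * k) / (2 ^ (2 * k) * fact k)))"
    using has_bochner_integral_even_function[OF gaussian_moment_even_pos[where k=k]] by simp
  then show ?thesis using k by (simp add: Mm_def)
next
  case False
  then obtain k where k: "j = 2 * k + 1" using oddE by blast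
  have "has_bochner_integral lborel (\<lambda>x. exp (- x\<^sup>2) * x^(2 * k + 1)::real) 0"
    using gaussian_moment_odd_pos by (rule has_bochner_integral_odd_function) simp
  then show ?thesis using k by (simp add: Mm_def)
qed

lemma Mm_rec: "real (Suc j) * Mm j = 2 * Mm (Suc (Suc j))"
proof (cases "even j")
  case True
  then obtain k where k: "j = 2 * k" by blast
  have e1: "fact (Suc (Suc j)) = (real j + 2) * (real j + 1) * (fact j :: real)" by (simp add: algebra_simps)
  have e2: "fact (Suc (Suc j) div 2) = (real k + 1) * (fact k :: real)" using k by simp
  have e3: "j div 2 = k" using k by simp
  have e4: "(2::real) ^ Suc (Suc j) = 4 * 2 ^ j" by simp
  have jk: "real j = 2 * real k" using k by simp
  have "real (Suc j) * (sqrt pi * fact j / (2^j * fact k)) =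
     2 * (sqrt pi * ((real j + 2) * (real j + 1) * fact j) / (4 * 2 ^ j * ((real k + 1) * fact k)))"
    unfolding times_divide_eq_right
  proof (rule feq)
    show "2^j * fact k \<noteq> (0::real)" by simp
    show "4 * 2 ^ j * ((real k + 1) * fact k) \<noteq> (0::real)" by (simp add: add_nonneg_pos)
  qed (simp add: jk algebra_simps)
  then show ?thesis using True unfolding Mm_def e1 e2 e3 e4 by simp
next
  case False
  then show ?thesis by (simp add: Mm_def)
qed

lemma gauss_poly_int:
  fixes P :: "real poly"
  assumes "degree P \<le> N"
  shows "has_bochner_integral lborel (\<lambda>x. poly P x * exp (- (x\<^sup>2))) (\<Sum>j\<le>N. coeff P j * Mm j)"
proof -
  have "(\<lambda>x. poly P x * exp (- (x\<^sup>2))) = (\<lambda>x. \<Sum>j\<le>N. coeff P j * (exp (- (x\<^sup>2)) * x ^ j))"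
    by (simp add: poly_sum_le[OF assms] sum_distrib_left sum_distrib_right mult_ac)
  moreover have "has_bochner_integral lborel (\<lambda>x. \<Sum>j\<le>N. coeff P j * (exp (- (x\<^sup>2)) * x ^ j)) (\<Sum>j\<le>N. coeff P j * Mm j)"
    by (intro has_bochner_integral_sum has_bochner_integral_mult_right Mm_int)
  ultimately show ?thesis by simp
qed

definition gint :: "real poly \<Rightarrow> real" where
  "gint P = integral\<^sup>L lborel (\<lambda>x. poly P x * exp (- (x\<^sup>2)))"

lemma gint_integrable: fixes P :: "real poly" shows "integrable lborel (\<lambda>x. poly P x * exp (- (x\<^sup>2)))"
  using gauss_poly_int[OF order_refl, of P] by (simp add: has_bochner_integral_iff)

lemma gint_eq: "degree P \<le> N \<Longrightarrow> gint P = (\<Sum>j\<le>N. coeff P j * Mm j)"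
  unfolding gint_def by (rule has_bochner_integral_integral_eq[OF gauss_poly_int])

lemma gint_add: "gint (P + Q) = gint P + gint Q"
  unfolding gint_def by (simp add: distrib_right integral_add gint_integrable)

lemma gint_diff: "gint (P - Q) = gint P - gint Q"
  unfolding gint_def by (simp add: left_diff_distrib integral_diff gint_integrable)

lemma gint_smult: "gint (smult c P) = c * gint P"
  unfolding gint_def by (simp add: mult.assoc)

lemma gint_ibp: "gint (pderiv P) = gint ([:0,2:] * P)"
proof -
  define N where "N = degree P"
  define c where "c = coeff P"
  have cN: "c (Suc N) = 0" unfolding c_def N_def by (simp add: coeff_eq_0)
  have d1: "degree (pderiv P) \<le> N" unfolding N_def by (simp add: degree_pderiv)
  have d2: "degree ([:0,2:] * P) \<le> Suc N" unfolding N_def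
    by (rule order.trans[OF degree_mult_le]) simp
  have "gint (pderiv P) = (\<Sum>j\<le>N. real (Suc j) * c (Suc j) * Mm j)"
    unfolding gint_eq[OF d1] c_def by (simp add: coeff_pderiv)
  also have "\<dots> = (\<Sum>j\<le>N. 2 * c (Suc j) * Mm (Suc (Suc j)))"
    by (intro sum.cong refl) (simp add: Mm_rec[symmetric])
  also have "\<dots> = (\<Sum>i\<le>Suc N. 2 * c i * Mm (Suc i)) - 2 * c 0 * Mm 1"
    by (subst sum.atMost_Suc_shift) simp
  also have "\<dots> = (\<Sum>i\<le>Suc N. 2 * c i * Mm (Suc i))"
    by (simp add: Mm_def)
  also have "\<dots> = (\<Sum>i\<le>N. 2 * c i * Mm (Suc i))"
    using cN by simp
  also have "\<dots> = (\<Sum>j\<le>Suc N. coeff ([:0,2:] * P) j * Mm j)"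
    by (subst sum.atMost_Suc_shift) (simp add: c_def)
  also have "\<dots> = gint ([:0,2:] * P)"
    by (rule gint_eq[OF d2, symmetric])
  finally show ?thesis .
qed

lemma gint_Hp_Suc: "gint (Hp m * Hp (Suc n)) = gint (pderiv (Hp m) * Hp n)"
proof -
  have "Hp m * Hp (Suc n) = [:0,2:] * (Hp m * Hp n) - Hp m * pderiv (Hp n)"
    by (simp add: Hp.simps(2) algebra_simps)
  then have "gint (Hp m * Hp (Suc n)) = gint ([:0,2:] * (Hp m * Hp n)) - gint (Hp m * pderiv (Hp n))"
    by (simp add: gint_diff)
  also have "\<dots> = gint (pderiv (Hp m * Hp n)) - gint (Hp m * pderiv (Hp n))"
    by (simp add: gint_ibp)
  also have "\<dots> = gint (pderiv (Hp m) * Hp n)"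
    by (simp add: pderiv_mult gint_add ac_simps)
  finally show ?thesis .
qed

lemma gint_Hp: "gint (Hp m * Hp n) = (if m = n then 2^n * fact n * sqrt pi else 0)"
proof (induction n arbitrary: m)
  case 0
  show ?case
  proof (cases m)
    case 0
    have "gint 1 = sqrt pi" using gint_eq[of 1 0] by (simp add: Mm_def)
    then show ?thesis using 0 by simp
  next
    case (Suc m')
    have "gint (Hp 0 * Hp (Suc m')) = 0" by (simp only: gint_Hp_Suc) (simp add: gint_def)
    then show ?thesis using Suc by (simp add: mult.commute)
  qed
next
  case (Suc n)
  show ?case
  proof (cases m)
    case 0
    have "gint (Hp 0 * Hp (Suc n)) = 0" by (simp only: gint_Hp_Suc) (simp add: gint_def)
    then show ?thesis using 0 by simp
  next
    case (Suc m')
    have "gint (Hp m * Hp (Suc n)) = gint (smult (2 * real (Suc m')) (Hp m' * Hp n))"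
      unfolding gint_Hp_Suc Suc pderiv_Hp by simp
    also have "\<dots> = 2 * real (Suc m') * (if m' = n then 2^n * fact n * sqrt pi else 0)"
      by (simp add: gint_smult Suc.IH)
    also have "\<dots> = (if m = Suc n then 2^Suc n * fact (Suc n) * sqrt pi else 0)"
      using Suc by auto
    finally show ?thesis .
  qed
qed

definition hf :: "nat \<Rightarrow> real \<Rightarrow> real" where
  "hf n t = inverse (sqrt (2 ^ n * fact n * sqrt pi)) * exp (- (t\<^sup>2) / 2) * hermite_poly n t"

definition lf :: "nat \<Rightarrow> real \<Rightarrow> real" where
  "lf n t = laguerre_poly n t * exp (- t / 2)"

lemma hf_mult: "hf m t * hf n t = inverse (sqrt (2 ^ m * fact m * sqrt pi)) * inverse (sqrt (2 ^ n * fact n * sqrt pi))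
   * (poly (Hp m * Hp n) t * exp (- (t\<^sup>2)))"
proof -
  have "exp (- (t\<^sup>2) / 2) * exp (- (t\<^sup>2) / 2) = exp (- (t\<^sup>2))"
    by (simp flip: exp_add)
  then show ?thesis unfolding hf_def hermite_poly_Hp by (simp add: algebra_simps)
qed

lemma hf_mult_integrable: "integrable lborel (\<lambda>t. hf m t * hf n t)"
  unfolding hf_mult by (intro integrable_mult_right gint_integrable)

lemma hf_orth: "integral\<^sup>L lborel (\<lambda>t. hf m t * hf n t) = (if m = n then 1 else 0)"
proof -
  have "integral\<^sup>L lborel (\<lambda>t. hf m t * hf n t) = inverse (sqrt (2 ^ m * fact m * sqrt pi)) * inverse (sqrt (2 ^ n * fact n * sqrt pi))
     * gint (Hp m * Hp n)"
    unfolding hf_mult gint_def by simp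
  also have "\<dots> = (if m = n then 1 else 0)"
  proof (cases "m = n")
    case True
    have pos: "2 ^ n * fact n * sqrt pi > (0::real)" by auto
    have "inverse (sqrt (2 ^ n * fact n * sqrt pi)) * inverse (sqrt (2 ^ n * fact n * sqrt pi)) * (2^n * fact n * sqrt pi) = 1"
      using pos by (simp add: field_simps flip: power2_eq_square)
    then show ?thesis using True by (simp add: gint_Hp)
  qed (simp add: gint_Hp)
  finally show ?thesis .
qed

lemma hf_abs_bound: "integral\<^sup>L lborel (\<lambda>t. \<bar>hf m t * hf n t\<bar>) \<le> 1"
proof -
  have "integral\<^sup>L lborel (\<lambda>t. \<bar>hf m t * hf n t\<bar>) \<le> integral\<^sup>L lborel (\<lambda>t. (hf m t * hf m t + hf n t * hf n t) / 2)"
  proof (rule integral_mono)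
    show "integrable lborel (\<lambda>t. \<bar>hf m t * hf n t\<bar>)"
      using hf_mult_integrable by (rule integrable_abs)
    show "integrable lborel (\<lambda>t. (hf m t * hf m t + hf n t * hf n t) / 2)"
      using Bochner_Integration.integrable_add[OF hf_mult_integrable[of m m] hf_mult_integrable[of n n]]
      by (rule integrable_divide)
    fix t
    define u where "u = \<bar>hf m t\<bar>"
    define v where "v = \<bar>hf n t\<bar>"
    have "0 \<le> (u - v) * (u - v)" by simp
    then have "2 * (u * v) \<le> u * u + v * v" by (simp add: algebra_simps)
    then have "u * v \<le> (u * u + v * v) / 2" by simp
    then show "\<bar>hf m t * hf n t\<bar> \<le> (hf m t * hf m t + hf n t * hf n t) / 2"
      unfolding u_def v_def by (simp add: abs_mult)
  qed
  also have "\<dots> = 1"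
    by (simp add: integral_add hf_mult_integrable hf_orth)
  finally show ?thesis .
qed

lemma hf_minus: "hf n (- t) = (-1)^n * hf n t"
  unfolding hf_def by (simp add: hermite_poly_minus)

lemma beta_bound: "\<bar>beta r\<bar> \<le> 1"
proof -
  have "beta r = (\<Prod>i = 0..<r. (real r - 3/2 - real i) / real (r - i))"
    unfolding beta_def by (rule gbinomial_altdef_of_nat)
  also have "\<dots> = (\<Prod>i = 0..<r. (real (r - i) - 3/2) / real (r - i))"
    by (intro prod.cong) (auto simp: of_nat_diff)
  finally have e: "\<bar>beta r\<bar> = (\<Prod>i = 0..<r. \<bar>(real (r - i) - 3/2) / real (r - i)\<bar>)"
    by (simp add: abs_prod)
  also have "\<dots> \<le> (\<Prod>i = 0..<r. 1)"
  proof (rule prod_mono)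
    fix i assume "i \<in> {0..<r}"
    then have R: "real (r - i) \<ge> 1" by auto
    then have "\<bar>real (r - i) - 3/2\<bar> \<le> real (r - i)" by auto
    then have "\<bar>real (r - i) - 3/2\<bar> / real (r - i) \<le> 1" using R by simp
    then show "0 \<le> \<bar>(real (r - i) - 3/2) / real (r - i)\<bar> \<and> \<bar>(real (r - i) - 3/2) / real (r - i)\<bar> \<le> 1"
      by simp
  qed
  finally show ?thesis by simp
qed

lemma aux_alg3:
  fixes A S P F B Q :: real
  assumes "A > 0" "S > 0" "P > 0"
  shows "inverse (A * S * P) * (Q * A * A) * F * B = Q * A * F / S / P * B"
  using assms by (simp add: field_simps)

lemma hf_key:
  assumes "t \<ge> 0"
  shows "hf (2*m) (sqrt t) = (\<Sum>q\<le>m. ((-1)^m * 2^m * fact m / sqrt (fact (2*m)) / pi powr (1/4) * beta (m-q)) * lf q t)"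
proof -
  have s: "sqrt (2 ^ (2*m) * fact (2*m) * sqrt pi) = 2^m * sqrt (fact (2*m)) * pi powr (1/4)"
  proof -
    have "sqrt pi = pi powr (1/2)" by (simp add: powr_half_sqrt)
    then have "sqrt (sqrt pi) = pi powr (1/4)"
      by (simp add: powr_half_sqrt[symmetric] powr_powr)
    moreover have "sqrt (2 ^ (2*m)) = (2::real)^m" by (simp add: power_mult real_sqrt_power)
    ultimately show ?thesis by (simp add: real_sqrt_mult)
  qed
  have ex: "exp (- ((sqrt t)\<^sup>2) / 2) = exp (- t / 2)" using assms by simp
  have "hf (2*m) (sqrt t) = inverse (2^m * sqrt (fact (2*m)) * pi powr (1/4)) * exp (- t / 2) *
      ((-4)^m * fact m * (\<Sum>q\<le>m. beta (m-q) * laguerre_poly q t))"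
    unfolding hf_def s ex key_identity[OF assms] ..
  also have "\<dots> = (\<Sum>q\<le>m. (inverse (2^m * sqrt (fact (2*m)) * pi powr (1/4)) * (-4)^m * fact m * beta (m-q)) * lf q t)"
    unfolding lf_def sum_distrib_left by (intro sum.cong refl) (simp only: mult_ac)
  also have "\<dots> = (\<Sum>q\<le>m. ((-1)^m * 2^m * fact m / sqrt (fact (2*m)) / pi powr (1/4) * beta (m-q)) * lf q t)"
  proof (intro sum.cong refl)
    fix q
    have f4: "(4::real)^m = 2^m * 2^m" by (simp flip: power_mult_distrib)
    have e: "(-4::real)^m = (-1)^m * 2^m * 2^m" by (simp add: power_minus[of 4] f4)
    show "(inverse (2^m * sqrt (fact (2*m)) * pi powr (1/4)) * (-4)^m * fact m * beta (m-q)) * lf q t =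
        ((-1)^m * 2^m * fact m / sqrt (fact (2*m)) / pi powr (1/4) * beta (m-q)) * lf q t"
      unfolding e by (subst aux_alg3) auto
  qed
  finally show ?thesis .
qed




lemma lborel_prod_basis:
  fixes G :: "'a::euclidean_space \<Rightarrow> real \<Rightarrow> real"
  assumes meas[measurable]: "\<And>b. b \<in> Basis \<Longrightarrow> G b \<in> borel_measurable borel"
  assumes int: "\<And>b. b \<in> Basis \<Longrightarrow> integrable lborel (G b)"
  shows "integrable lborel (\<lambda>x::'a. \<Prod>b\<in>Basis. G b (x \<bullet> b))"
    and "integral\<^sup>L lborel (\<lambda>x::'a. \<Prod>b\<in>Basis. G b (x \<bullet> b)) = (\<Prod>b\<in>Basis. integral\<^sup>L lborel (G b))"
proof -
  interpret product_sigma_finite "\<lambda>_::'a. lborel"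
    by (simp add: product_sigma_finite_def lborel.sigma_finite_measure_axioms)
  define T where "T = (\<lambda>f. \<Sum>b\<in>(Basis::'a set). f b *\<^sub>R b)"
  have Tm: "T \<in> measurable (\<Pi>\<^sub>M b\<in>Basis. lborel) borel"
    unfolding T_def by measurable
  have Fm: "(\<lambda>x::'a. \<Prod>b\<in>Basis. G b (x \<bullet> b)) \<in> borel_measurable borel"
    by measurable
  have TB: "T f \<bullet> b = f b" if "b \<in> Basis" for f b
    using that unfolding T_def
    by (simp add: inner_sum_left inner_Basis if_distrib cong: if_cong)
  have eqF: "(\<Prod>b\<in>Basis. G b (T f \<bullet> b)) = (\<Prod>b\<in>Basis. G b (f b))" for f
    by (intro prod.cong) (simp_all add: TB)
  have "integrable (\<Pi>\<^sub>M b\<in>Basis. lborel) (\<lambda>f. \<Prod>b\<in>Basis. G b (f b))"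
    by (intro product_integrable_prod int) simp
  then show "integrable lborel (\<lambda>x::'a. \<Prod>b\<in>Basis. G b (x \<bullet> b))"
    by (subst lborel_eq, subst integrable_distr_eq[OF Tm[unfolded T_def] Fm]) (simp add: eqF[unfolded T_def])
  have "integral\<^sup>L lborel (\<lambda>x::'a. \<Prod>b\<in>Basis. G b (x \<bullet> b)) =
      integral\<^sup>L (\<Pi>\<^sub>M b\<in>Basis. lborel) (\<lambda>f. \<Prod>b\<in>Basis. G b (T f \<bullet> b))"
    by (subst lborel_eq, subst integral_distr[OF Tm[unfolded T_def] Fm]) (simp add: T_def)
  also have "\<dots> = integral\<^sup>L (\<Pi>\<^sub>M b\<in>Basis. lborel) (\<lambda>f. \<Prod>b\<in>Basis. G b (f b))"
    by (simp add: eqF)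
  also have "\<dots> = (\<Prod>b\<in>Basis. integral\<^sup>L lborel (G b))"
    by (intro product_integral_prod int) simp
  finally show "integral\<^sup>L lborel (\<lambda>x::'a. \<Prod>b\<in>Basis. G b (x \<bullet> b)) = (\<Prod>b\<in>Basis. integral\<^sup>L lborel (G b))" .
qed

lemma Basis_vec_real: "(Basis :: (real^'d) set) = (\<lambda>j. axis j 1) ` UNIV"
  unfolding Basis_vec_def by auto

lemma inj_axis1: "inj (\<lambda>j::'d::finite. axis j (1::real))"
  by (auto simp: inj_def axis_eq_axis)

lemma vec_prod_basis:
  fixes g :: "'d::finite \<Rightarrow> real \<Rightarrow> real"
  defines "G \<equiv> (\<lambda>b::real^'d. g (SOME j. b = axis j 1))"
  shows "(\<Prod>j\<in>UNIV. g j (x $ j)) = (\<Prod>b\<in>Basis. G b (x \<bullet> b))"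
    and "(\<Prod>j\<in>UNIV. c j) = (\<Prod>b\<in>(Basis :: (real^'d) set). c (SOME j. b = axis j 1))"
proof -
  have S: "(SOME j'. axis j (1::real) = axis j' 1) = j" for j :: 'd
    by (rule some_equality) (auto simp: axis_eq_axis)
  show "(\<Prod>j\<in>UNIV. g j (x $ j)) = (\<Prod>b\<in>Basis. G b (x \<bullet> b))"
    unfolding Basis_vec_real using inj_axis1
    by (subst prod.reindex) (auto simp: G_def S inner_axis)
  show "(\<Prod>j\<in>UNIV. c j) = (\<Prod>b\<in>(Basis :: (real^'d) set). c (SOME j. b = axis j 1))"
    unfolding Basis_vec_real using inj_axis1
    by (subst prod.reindex) (auto simp: S)
qed

lemma lborel_prod_vec:
  fixes g :: "'d::finite \<Rightarrow> real \<Rightarrow> real"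
  assumes meas: "\<And>j. g j \<in> borel_measurable borel"
  assumes int: "\<And>j. integrable lborel (g j)"
  shows "integrable lborel (\<lambda>x::real^'d. \<Prod>j\<in>UNIV. g j (x $ j))"
    and "integral\<^sup>L lborel (\<lambda>x::real^'d. \<Prod>j\<in>UNIV. g j (x $ j)) = (\<Prod>j\<in>UNIV. integral\<^sup>L lborel (g j))"
proof -
  define G where "G = (\<lambda>b::real^'d. g (SOME j. b = axis j 1))"
  have e: "(\<lambda>x::real^'d. \<Prod>j\<in>UNIV. g j (x $ j)) = (\<lambda>x. \<Prod>b\<in>Basis. G b (x \<bullet> b))"
    unfolding G_def by (rule ext, rule vec_prod_basis(1))
  have m: "G b \<in> borel_measurable borel" "integrable lborel (G b)" for b
    unfolding G_def using meas int by auto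
  show "integrable lborel (\<lambda>x::real^'d. \<Prod>j\<in>UNIV. g j (x $ j))"
    unfolding e by (rule lborel_prod_basis(1)[OF m])
  have "integral\<^sup>L lborel (\<lambda>x::real^'d. \<Prod>j\<in>UNIV. g j (x $ j)) = (\<Prod>b\<in>(Basis :: (real^'d) set). integral\<^sup>L lborel (G b))"
    unfolding e by (rule lborel_prod_basis(2)[OF m])
  also have "\<dots> = (\<Prod>j\<in>UNIV. integral\<^sup>L lborel (g j))"
    unfolding G_def by (rule vec_prod_basis(2)[symmetric])
  finally show "integral\<^sup>L lborel (\<lambda>x::real^'d. \<Prod>j\<in>UNIV. g j (x $ j)) = (\<Prod>j\<in>UNIV. integral\<^sup>L lborel (g j))" .
qed

lemma hf_cont: "continuous_on UNIV (hf n)"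
proof -
  have "hf n = (\<lambda>t. inverse (sqrt (2 ^ n * fact n * sqrt pi)) * exp (- (t\<^sup>2) / 2) * poly (Hp n) t)"
    unfolding hf_def hermite_poly_Hp ..
  moreover have "continuous_on UNIV (\<lambda>t. inverse (sqrt (2 ^ n * fact n * sqrt pi)) * exp (- (t\<^sup>2) / 2) * poly (Hp n) t)"
    by (intro continuous_on_mult continuous_on_const continuous_on_exp continuous_on_divide continuous_on_minus
          continuous_on_power continuous_on_id continuous_on_poly) auto
  ultimately show ?thesis by simp
qed

lemma hf_meas: "hf n \<in> borel_measurable borel"
  using hf_cont by (rule borel_measurable_continuous_onI)

lemma hermite_fun_hf: "hermite_fun n x = (\<Prod>j\<in>UNIV. hf (n j) (x $ j))"
  unfolding hermite_fun_def hf_def ..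

lemma laguerre_fun_lf: "laguerre_fun n x = (\<Prod>j\<in>UNIV. lf (n j) (x $ j))"
  unfolding laguerre_fun_def lf_def ..

lemma hermite_fun_orth:
  fixes k n :: "'d::finite \<Rightarrow> nat"
  shows "integrable lborel (\<lambda>x::real^'d. hermite_fun k x * hermite_fun n x)"
    and "integral\<^sup>L lborel (\<lambda>x::real^'d. hermite_fun k x * hermite_fun n x) = (if k = n then 1 else 0)"
    and "integral\<^sup>L lborel (\<lambda>x::real^'d. \<bar>hermite_fun k x * hermite_fun n x\<bar>) \<le> 1"
proof -
  have e: "hermite_fun k x * hermite_fun n x = (\<Prod>j\<in>UNIV. hf (k j) (x $ j) * hf (n j) (x $ j))" for x :: "real^'d"
    unfolding hermite_fun_hf by (simp add: prod.distrib)
  have ea: "\<bar>hermite_fun k x * hermite_fun n x\<bar> = (\<Prod>j\<in>UNIV. \<bar>hf (k j) (x $ j) * hf (n j) (x $ j)\<bar>)" for x :: "real^'d"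
    unfolding e by (simp add: abs_prod)
  have m: "(\<lambda>t. hf (k j) t * hf (n j) t) \<in> borel_measurable borel" for j
    using hf_meas by measurable
  have ma: "(\<lambda>t. \<bar>hf (k j) t * hf (n j) t\<bar>) \<in> borel_measurable borel" for j
    using hf_meas by measurable
  show "integrable lborel (\<lambda>x::real^'d. hermite_fun k x * hermite_fun n x)"
    unfolding e by (rule lborel_prod_vec(1)[OF m hf_mult_integrable])
  have "integral\<^sup>L lborel (\<lambda>x::real^'d. hermite_fun k x * hermite_fun n x) = (\<Prod>j\<in>UNIV. (if k j = n j then 1 else 0))"
    unfolding e lborel_prod_vec(2)[OF m hf_mult_integrable] hf_orth ..
  also have "\<dots> = (if k = n then 1 else 0)"
    by (auto simp: fun_eq_iff)
  finally show "integral\<^sup>L lborel (\<lambda>x::real^'d. hermite_fun k x * hermite_fun n x) = (if k = n then 1 else 0)" .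
  have "integral\<^sup>L lborel (\<lambda>x::real^'d. \<bar>hermite_fun k x * hermite_fun n x\<bar>) =
      (\<Prod>j\<in>UNIV. integral\<^sup>L lborel (\<lambda>t. \<bar>hf (k j) t * hf (n j) t\<bar>))"
    unfolding ea by (rule lborel_prod_vec(2)[OF ma integrable_abs[OF hf_mult_integrable]])
  also have "\<dots> \<le> (\<Prod>j\<in>(UNIV::'d set). 1)"
    by (intro prod_mono conjI hf_abs_bound integral_nonneg_AE) auto
  finally show "integral\<^sup>L lborel (\<lambda>x::real^'d. \<bar>hermite_fun k x * hermite_fun n x\<bar>) \<le> 1" by simp
qed

lemma power_mabs: "(c::real) ^ mabs n = (\<Prod>j\<in>UNIV. c ^ n j)"
  by (simp add: mabs_def power_sum)

lemma mfact_powr: "mfact n powr e = (\<Prod>j\<in>UNIV. fact (n j) powr e)"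
  unfolding mfact_def by (rule prod_powr_distrib)

lemma mfact_pos: "mfact n > 0"
  unfolding mfact_def by (intro prod_pos) auto

lemma mfact_ge1: "mfact n \<ge> 1"
  unfolding mfact_def by (intro prod_ge_1) auto

lemma prod_summable_on:
  fixes \<phi> :: "nat \<Rightarrow> real"
  assumes nn: "\<And>m. \<phi> m \<ge> 0" and s: "summable \<phi>"
  shows "(\<lambda>k::'d::finite\<Rightarrow>nat. \<Prod>j\<in>UNIV. \<phi> (k j)) summable_on UNIV"
proof (rule nonneg_bdd_above_summable_on)
  show "0 \<le> (\<Prod>j\<in>UNIV. \<phi> (k j))" for k :: "'d \<Rightarrow> nat" by (intro prod_nonneg) (simp add: nn)
  show "bdd_above (sum (\<lambda>k::'d\<Rightarrow>nat. \<Prod>j\<in>UNIV. \<phi> (k j)) ` {F. F \<subseteq> UNIV \<and> finite F})"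
  proof (rule bdd_aboveI)
    fix y assume "y \<in> sum (\<lambda>k::'d\<Rightarrow>nat. \<Prod>j\<in>UNIV. \<phi> (k j)) ` {F. F \<subseteq> UNIV \<and> finite F}"
    then obtain F where y: "y = (\<Sum>k\<in>F. \<Prod>j\<in>(UNIV::'d set). \<phi> (k j))" and F0: "F \<in> {F. F \<subseteq> UNIV \<and> finite F}"
      by (rule imageE) blast
    from F0 have F: "finite F" by simp
    define N where "N = Max (insert 0 (\<Union>k\<in>F. range k))"
    have fin: "finite (insert 0 (\<Union>k\<in>F. range k))" using F by auto
    have sub: "F \<subseteq> PiE (UNIV::'d set) (\<lambda>_. {..N})"
    proof
      fix k assume "k \<in> F"
      then have "k j \<le> N" for j unfolding N_def using fin by (intro Max_ge) auto
      then show "k \<in> PiE (UNIV::'d set) (\<lambda>_. {..N})" by (auto simp: PiE_iff)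
    qed
    have "y \<le> (\<Sum>k\<in>PiE (UNIV::'d set) (\<lambda>_. {..N}). \<Prod>j\<in>(UNIV::'d set). \<phi> (k j))"
    proof -
      have finP: "finite (PiE (UNIV::'d set) (\<lambda>_. {..N}))" by (rule finite_PiE) auto
      show ?thesis unfolding y by (rule sum_mono2[OF finP sub]) (simp add: prod_nonneg nn)
    qed
    also have "\<dots> = (\<Prod>j\<in>(UNIV::'d set). \<Sum>m\<le>N. \<phi> m)"
      by (rule prod_sum_PiE[symmetric]) auto
    also have "\<dots> \<le> (\<Prod>j\<in>(UNIV::'d set). suminf \<phi>)"
      by (intro prod_mono conjI sum_nonneg sum_le_suminf s nn) auto
    finally show "y \<le> (\<Prod>j\<in>(UNIV::'d set). suminf \<phi>)" .
  qed
qed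

lemma fact_powr_bound:
  fixes \<rho> \<epsilon> :: real
  assumes "\<epsilon> > 0" "\<rho> \<ge> 0"
  shows "\<exists>M. \<forall>m. \<rho> ^ m / fact m powr \<epsilon> \<le> M"
proof (cases "\<rho> = 0")
  case True
  show ?thesis
  proof (intro exI allI)
    fix m :: nat
    show "\<rho> ^ m / fact m powr \<epsilon> \<le> 1"
      using True by (cases m) auto
  qed
next
  case False
  then have rp: "\<rho> > 0" using assms by simp
  define r where "r = \<rho> powr (1 / \<epsilon>)"
  have r: "r > 0" unfolding r_def using rp by simp
  have "summable (\<lambda>n. inverse (fact n) * r ^ n)" by (rule summable_exp)
  then have "(\<lambda>n. inverse (fact n) * r ^ n) \<longlonglongrightarrow> 0" by (rule summable_LIMSEQ_zero)
  then have "Bseq (\<lambda>n. inverse (fact n) * r ^ n)" by (intro convergent_imp_Bseq convergentI)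
  then obtain B where B0: "\<forall>n. norm (inverse (fact n) * r ^ n) \<le> B" unfolding Bseq_def by blast
  then have B: "\<And>n. norm (inverse (fact n) * r ^ n) \<le> B" by blast
  show ?thesis
  proof (intro exI allI)
    fix m :: nat
    have "\<rho> ^ m / fact m powr \<epsilon> = (r ^ m / fact m) powr \<epsilon>"
    proof -
      have "(r ^ m) powr \<epsilon> = \<rho> ^ m"
        unfolding r_def using rp assms(1)
        by (simp add: powr_realpow[symmetric] powr_powr)
      then show ?thesis using r by (simp add: powr_divide)
    qed
    also have "\<dots> \<le> B powr \<epsilon>"
      using B[of m] r assms by (intro powr_mono2) (auto simp: field_simps)
    finally show "\<rho> ^ m / fact m powr \<epsilon> \<le> B powr \<epsilon>" .
  qed
qed

lemma phi_summable:
  fixes \<rho> \<epsilon> :: real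
  assumes "\<epsilon> > 0" "\<rho> \<ge> 0"
  shows "summable (\<lambda>m. \<rho> ^ m / fact m powr \<epsilon>)"
proof -
  obtain M where M: "\<And>m. (2 * \<rho>) ^ m / fact m powr \<epsilon> \<le> M"
    using fact_powr_bound[OF assms(1), of "2 * \<rho>"] assms by auto
  show ?thesis
  proof (rule summable_comparison_test)
    show "summable (\<lambda>m. M * (1/2) ^ m)" by (intro summable_mult summable_geometric) simp
    show "\<exists>N. \<forall>n\<ge>N. norm (\<rho> ^ n / fact n powr \<epsilon>) \<le> M * (1/2) ^ n"
    proof (intro exI allI impI)
      fix n :: nat
      have "\<rho> ^ n / fact n powr \<epsilon> = ((2 * \<rho>) ^ n / fact n powr \<epsilon>) * (1/2) ^ n"
        by (simp add: power_mult_distrib field_simps)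
      also have "\<dots> \<le> M * (1/2) ^ n"
        using M[of n] by (intro mult_right_mono) auto
      finally show "norm (\<rho> ^ n / fact n powr \<epsilon>) \<le> M * (1/2) ^ n"
        using assms by simp
    qed
  qed
qed

lemma multi_summable:
  fixes \<rho> \<epsilon> :: real
  assumes "\<epsilon> > 0" "\<rho> \<ge> 0"
  shows "(\<lambda>k::'d::finite\<Rightarrow>nat. \<rho> ^ mabs k / mfact k powr \<epsilon>) summable_on UNIV"
proof -
  have "(\<lambda>k::'d\<Rightarrow>nat. \<Prod>j\<in>UNIV. \<rho> ^ k j / fact (k j) powr \<epsilon>) summable_on UNIV"
    by (rule prod_summable_on) (use assms in \<open>auto intro: phi_summable\<close>)
  moreover have "(\<Prod>j\<in>UNIV. \<rho> ^ k j / fact (k j) powr \<epsilon>) = \<rho> ^ mabs k / mfact k powr \<epsilon>" for k :: "'d \<Rightarrow> nat"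
    by (simp add: power_mabs mfact_powr prod_dividef)
  ultimately show ?thesis by simp
qed

lemma summable_on_pair_nonneg:
  fixes u v :: "_ \<Rightarrow> real"
  assumes "\<And>x. u x \<ge> 0" "\<And>y. v y \<ge> 0" "u summable_on A" "v summable_on B"
  shows "(\<lambda>(x,y). u x * v y) summable_on (A \<times> B)"
proof -
  have "(\<lambda>z. case z of (x,y) \<Rightarrow> u x * v y) summable_on Sigma A (\<lambda>_. B)"
  proof (rule summable_on_SigmaI)
    show "((\<lambda>y. case (x, y) of (x, y) \<Rightarrow> u x * v y) has_sum (u x * infsum v B)) B" for x
      using has_sum_cmult_right[OF has_sum_infsum[OF assms(4)], of "u x"] by simp
    show "(\<lambda>x. u x * infsum v B) summable_on A"
      using assms(3) by (rule summable_on_cmult_left)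
  qed (use assms in auto)
  then show ?thesis by simp
qed




lemma prod_if_single:
  fixes f :: "'d::finite \<Rightarrow> 'a::comm_monoid_mult"
  shows "(\<Prod>i\<in>UNIV. if i = j then c * f i else f i) = c * (\<Prod>i\<in>UNIV. f i)"
proof -
  have "(\<Prod>i\<in>UNIV. if i = j then c * f i else f i) = (c * f j) * (\<Prod>i\<in>UNIV - {j}. f i)"
    by (subst prod.remove[of UNIV j]) (auto intro!: prod.cong)
  also have "\<dots> = c * (\<Prod>i\<in>UNIV. f i)"
    by (subst prod.remove[of UNIV j, where g = f]) (auto simp: mult_ac)
  finally show ?thesis .
qed

lemma hermite_fun_refl:
  "hermite_fun k (\<chi> i. if i = j then - (x $ i) else x $ i) = (-1)^(k j) * hermite_fun k x"
proof -
  have "hermite_fun k (\<chi> i. if i = j then - (x $ i) else x $ i) =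
      (\<Prod>i\<in>UNIV. if i = j then (-1)^(k j) * hf (k i) (x $ i) else hf (k i) (x $ i))"
    unfolding hermite_fun_hf by (intro prod.cong) (auto simp: hf_minus)
  also have "\<dots> = (-1)^(k j) * hermite_fun k x"
    unfolding hermite_fun_hf by (rule prod_if_single)
  finally show ?thesis .
qed

lemma even_reduce:
  fixes a :: "('d::finite \<Rightarrow> nat) \<Rightarrow> complex" and f :: "real^'d \<Rightarrow> complex"
  assumes hs: "\<And>x. ((\<lambda>k. a k * complex_of_real (hermite_fun k x)) has_sum f x) UNIV"
    and ev: "\<And>j x. f (\<chi> i. if i = j then - (x $ i) else x $ i) = f x"
  shows "((\<lambda>k. (if \<forall>j. even (k j) then a k else 0) * complex_of_real (hermite_fun k x)) has_sum f x) UNIV"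
proof -
  have "\<forall>x. ((\<lambda>k. (if \<forall>j\<in>J. even (k j) then a k else 0) * complex_of_real (hermite_fun k x)) has_sum f x) UNIV"
    if "finite J" for J :: "'d set"
    using that
  proof (induction J rule: finite_induct)
    case empty
    then show ?case using hs by simp
  next
    case (insert j J)
    show ?case
    proof
      fix x :: "real^'d"
      define A where "A k = (if \<forall>j\<in>J. even (k j) then a k else 0)" for k :: "'d \<Rightarrow> nat"
      define Rx where "Rx = (\<chi> i. if i = j then - (x $ i) else x $ i)"
      have h1: "((\<lambda>k. A k * complex_of_real (hermite_fun k x)) has_sum f x) UNIV"
        using insert.IH unfolding A_def by blast
      have "((\<lambda>k. A k * complex_of_real (hermite_fun k Rx)) has_sum f Rx) UNIV"
        using insert.IH unfolding A_def by blast
      then have h2: "((\<lambda>k. A k * ((-1)^(k j) * complex_of_real (hermite_fun k x))) has_sum f x) UNIV"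
        unfolding Rx_def hermite_fun_refl ev by simp
      have "((\<lambda>k. A k * complex_of_real (hermite_fun k x) + A k * ((-1)^(k j) * complex_of_real (hermite_fun k x)))
          has_sum (f x + f x)) UNIV"
        by (rule has_sum_add[OF h1 h2])
      then have "((\<lambda>k. (1/2) * (A k * complex_of_real (hermite_fun k x) + A k * ((-1)^(k j) * complex_of_real (hermite_fun k x))))
          has_sum ((1/2) * (f x + f x))) UNIV"
        by (rule has_sum_cmult_right)
      moreover have "(1/2) * (A k * complex_of_real (hermite_fun k x) + A k * ((-1)^(k j) * complex_of_real (hermite_fun k x)))
          = (if \<forall>j'\<in>insert j J. even (k j') then a k else 0) * complex_of_real (hermite_fun k x)" for k
      proof (cases "even (k j)")
        case True
        then show ?thesis unfolding A_def by auto
      next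
        case False
        then have "(-1::complex)^(k j) = -1" by simp
        then show ?thesis unfolding A_def using False by auto
      qed
      ultimately show "((\<lambda>k. (if \<forall>j'\<in>insert j J. even (k j') then a k else 0) * complex_of_real (hermite_fun k x)) has_sum f x) UNIV"
        by simp
    qed
  qed
  from this[of UNIV] show ?thesis by simp
qed

lemma infinite_multi: "infinite (UNIV :: ('d::finite \<Rightarrow> nat) set)"
proof
  assume fin: "finite (UNIV :: ('d \<Rightarrow> nat) set)"
  have "inj (\<lambda>m::nat. (\<lambda>_::'d. m))" by (auto simp: inj_def fun_eq_iff)
  then have "finite (UNIV :: nat set)"
    using finite_imageD[OF finite_subset[OF subset_UNIV fin]] by blast
  then show False by simp
qed

lemma has_sum_single_UNIV: "((\<lambda>k. if k = n then c else 0) has_sum c) UNIV"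
proof -
  have "((\<lambda>k. if k = n then c else 0) has_sum c) {n}"
    using has_sum_finite[of "{n}" "\<lambda>k. if k = n then c else 0"] by simp
  then show ?thesis
    by (subst has_sum_cong_neutral[where T = "{n}" and g = "\<lambda>k. if k = n then c else 0"]) auto
qed

lemma coeff_ident:
  fixes c :: "('d::finite \<Rightarrow> nat) \<Rightarrow> complex" and f :: "real^'d \<Rightarrow> complex"
  assumes hs: "\<And>x. ((\<lambda>k. c k * complex_of_real (hermite_fun k x)) has_sum f x) UNIV"
    and hsn: "\<And>x. (\<lambda>k. norm (c k * complex_of_real (hermite_fun k x))) summable_on UNIV"
    and cs: "(\<lambda>k. norm (c k)) summable_on UNIV"
  shows "hermite_coeff f n = c n"
proof -
  define e where "e = from_nat_into (UNIV :: ('d \<Rightarrow> nat) set)"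
  have bij: "bij_betw e UNIV UNIV"
    unfolding e_def by (rule bij_betw_from_nat_into) (auto simp: infinite_multi)
  define F where "F i x = c (e i) * complex_of_real (hermite_fun (e i) x * hermite_fun n x)" for i x
  have sums: "(\<lambda>i. F i x) sums (f x * complex_of_real (hermite_fun n x))" for x
  proof -
    have "((\<lambda>i. c (e i) * complex_of_real (hermite_fun (e i) x)) has_sum f x) UNIV"
      using hs[of x] by (subst has_sum_reindex_bij_betw[OF bij])
    then have "(\<lambda>i. c (e i) * complex_of_real (hermite_fun (e i) x)) sums f x"
      by (rule has_sum_imp_sums)
    from sums_mult2[OF this, of "complex_of_real (hermite_fun n x)"]
    show ?thesis unfolding F_def by (simp add: mult.assoc)
  qed
  have int: "integrable lborel (F i)" for i
  proof -
    have "integrable lborel (\<lambda>x. complex_of_real (hermite_fun (e i) x * hermite_fun n x))"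
      by (simp only: complex_of_real_integrable_eq hermite_fun_orth(1))
    then show ?thesis unfolding F_def by (rule integrable_mult_right)
  qed
  have normF: "norm (F i x) = norm (c (e i) * complex_of_real (hermite_fun (e i) x)) * \<bar>hermite_fun n x\<bar>" for i x
    unfolding F_def by (simp add: norm_mult abs_mult)
  have ae: "AE x in lborel. summable (\<lambda>i. norm (F i x))"
  proof (rule AE_I2)
    fix x
    have "((\<lambda>k. norm (c k * complex_of_real (hermite_fun k x))) \<circ> e) summable_on UNIV"
      using hsn[of x] summable_on_reindex_bij_betw[OF bij, of "\<lambda>k. norm (c k * complex_of_real (hermite_fun k x))"]
      by (simp add: o_def)
    then have "summable (\<lambda>i. norm (c (e i) * complex_of_real (hermite_fun (e i) x)))"
      by (subst summable_on_UNIV_nonneg_real_iff[symmetric]) (auto simp: o_def)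
    then show "summable (\<lambda>i. norm (F i x))"
      unfolding normF by (rule summable_mult2)
  qed
  have intn: "integral\<^sup>L lborel (\<lambda>x. norm (F i x)) \<le> norm (c (e i))" for i
  proof -
    have "integral\<^sup>L lborel (\<lambda>x. norm (F i x)) = norm (c (e i)) * integral\<^sup>L lborel (\<lambda>x. \<bar>hermite_fun (e i) x * hermite_fun n x\<bar>)"
      unfolding F_def by (simp add: norm_mult abs_mult)
    also have "\<dots> \<le> norm (c (e i)) * 1"
      by (intro mult_left_mono hermite_fun_orth(3)) auto
    finally show ?thesis by simp
  qed
  have cs': "summable (\<lambda>i. norm (c (e i)))"
  proof -
    have "((\<lambda>k. norm (c k)) \<circ> e) summable_on UNIV"
      using cs summable_on_reindex_bij_betw[OF bij, of "\<lambda>k. norm (c k)"] by (simp add: o_def)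
    then show ?thesis by (subst summable_on_UNIV_nonneg_real_iff[symmetric]) (auto simp: o_def)
  qed
  have summ: "summable (\<lambda>i. integral\<^sup>L lborel (\<lambda>x. norm (F i x)))"
    by (rule summable_comparison_test[OF _ cs']) (auto intro!: exI integral_nonneg_AE intn)
  have "hermite_coeff f n = integral\<^sup>L lborel (\<lambda>x. (\<Sum>i. F i x))"
    unfolding hermite_coeff_def using sums by (intro Bochner_Integration.integral_cong refl) (simp add: sums_unique)
  also have "\<dots> = (\<Sum>i. integral\<^sup>L lborel (F i))"
    by (rule integral_suminf[OF int ae summ])
  also have "\<dots> = (\<Sum>i. if e i = n then c n else 0)"
  proof (intro suminf_cong)
    fix i
    have "integral\<^sup>L lborel (F i) = c (e i) * complex_of_real (if e i = n then 1 else 0)"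
      unfolding F_def by (simp only: integral_mult_right_zero integral_complex_of_real hermite_fun_orth(2))
    then show "integral\<^sup>L lborel (F i) = (if e i = n then c n else 0)" by auto
  qed
  also have "\<dots> = c n"
  proof -
    have "((\<lambda>i. if e i = n then c n else 0) has_sum c n) UNIV"
      using has_sum_single_UNIV[of n "c n"] by (subst has_sum_reindex_bij_betw[OF bij])
    then show ?thesis by (intro sums_unique[symmetric] has_sum_imp_sums)
  qed
  finally show ?thesis .
qed




lemma fact_mult_le: "fact a * fact b \<le> (fact (a + b) :: real)"
proof -
  have "fact a * fact (a + b - a) * ((a + b) choose a) = (fact (a + b) :: nat)"
    by (rule binomial_fact_lemma) simp
  moreover have "(a + b) choose a \<ge> 1" by (simp add: Suc_leI)
  ultimately have "fact a * fact b \<le> (fact (a + b) :: nat)"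
  proof -
    assume e: "fact a * fact (a + b - a) * ((a + b) choose a) = (fact (a + b) :: nat)"
      and c: "(a + b) choose a \<ge> 1"
    have e': "fact a * fact b * ((a + b) choose a) = (fact (a + b) :: nat)" using e by simp
    show ?thesis
      by (rule order_trans[OF _ eq_imp_le[OF e']]) (use c in simp)
  qed
  then have "real (fact a * fact b) \<le> real (fact (a + b))" by linarith
  then show ?thesis by (simp add: of_nat_mult)
qed

lemma mabs_add: "mabs (\<lambda>j. k j + p j) = mabs k + mabs p"
  by (simp add: mabs_def sum.distrib)

lemma mabs_dbl: "mabs (\<lambda>j. 2 * n j) = 2 * mabs n"
  by (simp add: mabs_def sum_distrib_left)

lemma mfact_add: "mfact k * mfact p \<le> mfact (\<lambda>j. k j + p j)"
  unfolding mfact_def prod.distrib[symmetric]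
  by (intro prod_mono conjI fact_mult_le) auto

lemma mfact_dbl: "mfact n ^ 2 \<le> mfact (\<lambda>j. 2 * n j)"
proof -
  have "mfact n ^ 2 = mfact n * mfact n" by (simp add: power2_eq_square)
  also have "\<dots> \<le> mfact (\<lambda>j. n j + n j)" by (rule mfact_add)
  also have "(\<lambda>j. n j + n j) = (\<lambda>j. 2 * n j)" by auto
  finally show ?thesis .
qed

lemma mbinom_beta: "mbinom (\<lambda>j. real (k j) - 3 / 2) k = (\<Prod>j\<in>UNIV. beta (k j))"
  unfolding mbinom_def beta_def ..

lemma mbinom_bound: "\<bar>mbinom (\<lambda>j. real (k j) - 3 / 2) k\<bar> \<le> 1"
  unfolding mbinom_beta abs_prod
  by (rule prod_le_1) (auto simp: beta_bound)

lemma ratio_bound: "mfact n / sqrt (mfact (\<lambda>j. 2 * n j)) \<le> 1"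
proof -
  have "mfact n = sqrt (mfact n ^ 2)" using mfact_pos[of n] by simp
  also have "\<dots> \<le> sqrt (mfact (\<lambda>j. 2 * n j))" by (rule real_sqrt_le_mono[OF mfact_dbl])
  finally show ?thesis using mfact_pos[of "\<lambda>j. 2 * n j"] by (simp add: divide_le_eq_1)
qed

lemma ratio_nonneg: "0 \<le> mfact n / sqrt (mfact (\<lambda>j. 2 * n j))"
  using mfact_pos[of n] mfact_pos[of "\<lambda>j. 2 * n j"] by simp

definition cc :: "('d::finite \<Rightarrow> nat) \<Rightarrow> ('d \<Rightarrow> nat) \<Rightarrow> real" where
  "cc k p = mbinom (\<lambda>j. real (k j) - 3 / 2) k * (-1) ^ mabs k * 2 ^ mabs k
      * mfact (\<lambda>j. k j + p j) / sqrt (mfact (\<lambda>j. 2 * (k j + p j)))"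

lemma cc_bound: "\<bar>cc k p\<bar> \<le> 2 ^ mabs k"
proof -
  have "\<bar>cc k p\<bar> = \<bar>mbinom (\<lambda>j. real (k j) - 3 / 2) k\<bar> * 2 ^ mabs k
      * (mfact (\<lambda>j. k j + p j) / sqrt (mfact (\<lambda>j. 2 * (k j + p j))))"
    unfolding cc_def using ratio_nonneg[of "\<lambda>j. k j + p j"]
    by (simp add: abs_mult abs_of_pos[OF mfact_pos] abs_of_nonneg[OF real_sqrt_ge_zero[OF less_imp_le[OF mfact_pos]]])
  also have "\<dots> \<le> 1 * 2 ^ mabs k * 1"
    using ratio_bound[of "\<lambda>j. k j + p j"] ratio_nonneg[of "\<lambda>j. k j + p j"] mbinom_bound[of k]
    by (intro mult_mono) auto
  finally show ?thesis by simp
qed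

definition Kp :: "('d::finite \<Rightarrow> nat) \<Rightarrow> real" where
  "Kp p = (-1) ^ mabs p * 2 ^ mabs p / pi powr (real CARD('d) / 4)"

lemma Kp_bound: "\<bar>Kp p\<bar> \<le> 2 ^ mabs p"
proof -
  have "pi powr (real CARD('d) / 4) \<ge> 1" using pi_gt3 by (intro ge_one_powr_ge_zero) auto
  then show ?thesis unfolding Kp_def by (simp add: abs_mult divide_le_eq)
qed

lemma decay_bound:
  fixes a :: "('d::finite \<Rightarrow> nat) \<Rightarrow> complex"
  assumes h: "h > 0" and sig: "\<sigma> > 0"
    and C: "\<And>n. norm (a n) * h ^ mabs n * mfact n powr (1 / (2 * \<sigma>)) \<le> C"
  shows "norm (a (\<lambda>j. 2 * (k j + p j))) \<le>
     C * ((1/h\<^sup>2) ^ mabs k / mfact k powr (1/\<sigma>)) * ((1/h\<^sup>2) ^ mabs p / mfact p powr (1/\<sigma>))"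
proof -
  define m where "m = (\<lambda>j. k j + p j)"
  define n where "n = (\<lambda>j. 2 * m j)"
  have n: "(\<lambda>j. 2 * (k j + p j)) = n" unfolding n_def m_def ..
  have mn: "mabs n = 2 * mabs k + 2 * mabs p" unfolding n_def mabs_dbl m_def mabs_add by simp
  have hp: "h ^ mabs n = (h\<^sup>2) ^ mabs k * (h\<^sup>2) ^ mabs p"
    unfolding mn by (simp add: power_add power_mult)
  have f1: "mfact n powr (1 / (2 * \<sigma>)) \<ge> mfact m powr (1/\<sigma>)"
  proof -
    have "(mfact m ^ 2) powr (1 / (2 * \<sigma>)) = mfact m powr (1 / (2 * \<sigma>)) * mfact m powr (1 / (2 * \<sigma>))"
      unfolding power2_eq_square using mfact_pos[of m] by (intro powr_mult)
    also have "\<dots> = mfact m powr (1 / (2 * \<sigma>) + 1 / (2 * \<sigma>))" by (simp only: powr_add)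
    also have "1 / (2 * \<sigma>) + 1 / (2 * \<sigma>) = 1 / \<sigma>" using sig by (simp add: field_simps)
    finally have "mfact m powr (1/\<sigma>) = (mfact m ^ 2) powr (1 / (2 * \<sigma>))" by simp
    also have "\<dots> \<le> mfact n powr (1 / (2 * \<sigma>))"
      unfolding n_def using sig by (intro powr_mono2 mfact_dbl) auto
    finally show ?thesis .
  qed
  have f2: "mfact m powr (1/\<sigma>) \<ge> mfact k powr (1/\<sigma>) * mfact p powr (1/\<sigma>)"
  proof -
    have "mfact k powr (1/\<sigma>) * mfact p powr (1/\<sigma>) = (mfact k * mfact p) powr (1/\<sigma>)"
      using mfact_pos[of k] mfact_pos[of p] by (simp add: powr_mult)
    also have "\<dots> \<le> mfact m powr (1/\<sigma>)"
      unfolding m_def using sig mfact_pos[of k] mfact_pos[of p] by (intro powr_mono2 mfact_add) auto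
    finally show ?thesis .
  qed
  define D where "D = (h\<^sup>2) ^ mabs k * (h\<^sup>2) ^ mabs p * (mfact k powr (1/\<sigma>) * mfact p powr (1/\<sigma>))"
  have Dpos: "D > 0" unfolding D_def using h mfact_pos[of k] mfact_pos[of p] by auto
  have "norm (a n) * D \<le> norm (a n) * (h ^ mabs n * mfact n powr (1 / (2 * \<sigma>)))"
    unfolding D_def hp using f1 f2 h mfact_pos[of k] mfact_pos[of p]
    by (intro mult_left_mono mult_left_mono[where c = "(h\<^sup>2) ^ mabs k * (h\<^sup>2) ^ mabs p"]) auto
  also have "\<dots> \<le> C" using C[of n] by (simp add: mult.assoc)
  finally have "norm (a n) \<le> C / D" using Dpos by (simp add: field_simps)
  also have "C / D = C * ((1/h\<^sup>2) ^ mabs k / mfact k powr (1/\<sigma>)) * ((1/h\<^sup>2) ^ mabs p / mfact p powr (1/\<sigma>))"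
    unfolding D_def by (simp add: field_simps power_one_over)
  finally show ?thesis unfolding n .
qed

lemma lf_bound:
  assumes "t \<ge> 0"
  shows "\<bar>lf q t\<bar> \<le> (1 + t) ^ q"
proof -
  have "\<bar>laguerre_poly q t\<bar> \<le> (\<Sum>i\<le>q. \<bar>(-1)^i * real (q choose i) / fact i * t^i\<bar>)"
    unfolding laguerre_poly_explicit by (rule sum_abs)
  also have "\<dots> \<le> (\<Sum>i\<le>q. real (q choose i) * t^i)"
  proof (rule sum_mono)
    fix i
    have "real (q choose i) / fact i \<le> real (q choose i) / 1"
      by (rule frac_le) (auto simp: fact_ge_1)
    then have "real (q choose i) / fact i * t^i \<le> real (q choose i) * t^i"
      using assms by (intro mult_right_mono) auto
    moreover have "\<bar>(-1)^i * real (q choose i) / fact i * t^i\<bar> = real (q choose i) / fact i * t^i"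
      using assms by (simp add: abs_mult)
    ultimately show "\<bar>(-1)^i * real (q choose i) / fact i * t^i\<bar> \<le> real (q choose i) * t^i"
      by simp
  qed
  also have "\<dots> = (t + 1) ^ q"
  proof -
    have "(t + 1) ^ q = (\<Sum>k\<le>q. of_nat (q choose k) * t^k * 1^(q-k))" by (rule binomial_ring)
    then show ?thesis by simp
  qed
  finally have L: "\<bar>laguerre_poly q t\<bar> \<le> (1 + t) ^ q" by (simp only: add.commute)
  have E: "\<bar>exp (- t / 2)\<bar> \<le> 1" using assms by simp
  have "\<bar>lf q t\<bar> = \<bar>laguerre_poly q t\<bar> * \<bar>exp (- t / 2)\<bar>" unfolding lf_def by (rule abs_mult)
  also have "\<dots> \<le> (1 + t) ^ q * 1"
    by (rule mult_mono[OF L E]) (use assms in auto)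
  finally show ?thesis by simp
qed

lemma laguerre_fun_bound:
  assumes "x \<in> pos_orthant"
  shows "\<bar>laguerre_fun p x\<bar> \<le> (1 + (\<Sum>j\<in>UNIV. x $ j)) ^ mabs p"
proof -
  have xp: "x $ j > 0" for j using assms by (simp add: pos_orthant_def)
  have le: "1 + x $ j \<le> 1 + (\<Sum>j\<in>UNIV. x $ j)" for j
    using xp by (intro add_left_mono member_le_sum) (auto intro: less_imp_le)
  have "\<bar>laguerre_fun p x\<bar> = (\<Prod>j\<in>UNIV. \<bar>lf (p j) (x $ j)\<bar>)"
    unfolding laguerre_fun_lf by (simp add: abs_prod)
  also have "\<dots> \<le> (\<Prod>j\<in>UNIV. (1 + (\<Sum>j\<in>UNIV. x $ j)) ^ p j)"
  proof (intro prod_mono conjI)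
    fix j
    show "0 \<le> \<bar>lf (p j) (x $ j)\<bar>" by simp
    have "\<bar>lf (p j) (x $ j)\<bar> \<le> (1 + x $ j) ^ p j" using xp[of j] by (intro lf_bound) auto
    also have "\<dots> \<le> (1 + (\<Sum>j\<in>UNIV. x $ j)) ^ p j" using xp[of j] by (intro power_mono le) auto
    finally show "\<bar>lf (p j) (x $ j)\<bar> \<le> (1 + (\<Sum>j\<in>UNIV. x $ j)) ^ p j" .
  qed
  also have "\<dots> = (1 + (\<Sum>j\<in>UNIV. x $ j)) ^ mabs p"
    by (simp add: power_mabs)
  finally show ?thesis .
qed

definition c1 :: "nat \<Rightarrow> nat \<Rightarrow> real" where
  "c1 m q = (-1)^m * 2^m * fact m / sqrt (fact (2*m)) / pi powr (1/4) * beta (m-q)"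

definition Cn :: "('d::finite \<Rightarrow> nat) \<Rightarrow> ('d \<Rightarrow> nat) \<Rightarrow> real" where
  "Cn n p = (\<Prod>j\<in>UNIV. c1 (n j) (p j))"

lemma hermite_expand:
  fixes x :: "real^'d::finite"
  assumes "x \<in> pos_orthant"
  shows "hermite_fun (\<lambda>j. 2 * n j) (wmap x) =
     (\<Sum>p\<in>PiE UNIV (\<lambda>j. {..n j}). Cn n p * laguerre_fun p x)"
proof -
  have xp: "x $ j \<ge> 0" for j using assms by (auto simp: pos_orthant_def less_imp_le)
  have "hermite_fun (\<lambda>j. 2 * n j) (wmap x) = (\<Prod>j\<in>UNIV. \<Sum>q\<le>n j. c1 (n j) q * lf q (x $ j))"
    unfolding hermite_fun_hf wmap_def c1_def using xp by (simp add: hf_key)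
  also have "\<dots> = (\<Sum>p\<in>PiE UNIV (\<lambda>j. {..n j}). \<Prod>j\<in>UNIV. c1 (n j) (p j) * lf (p j) (x $ j))"
    by (rule prod_sum_PiE) auto
  also have "\<dots> = (\<Sum>p\<in>PiE UNIV (\<lambda>j. {..n j}). Cn n p * laguerre_fun p x)"
    unfolding Cn_def laguerre_fun_lf by (simp add: prod.distrib)
  finally show ?thesis .
qed

lemma sqrt_prod: "sqrt (\<Prod>j\<in>A. f j) = (\<Prod>j\<in>A. sqrt (f j))"
  by (induction A rule: infinite_finite_induct) (auto simp: real_sqrt_mult)

lemma Cn_shift: fixes k p :: "'d::finite \<Rightarrow> nat" shows "Cn (\<lambda>j. k j + p j) p = Kp p * cc k p"
proof -
  have b: "(\<lambda>j. k j + p j - p j) = k" by auto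
  have pi4: "(\<Prod>j\<in>(UNIV::'d set). pi powr (1/4)) = pi powr (real CARD('d) / 4)"
    by (simp add: powr_power)
  have "Cn (\<lambda>j. k j + p j) p = (\<Prod>j\<in>UNIV. ((-1)^p j * 2^p j) * ((-1)^k j * 2^k j) * beta (k j)
        * fact (k j + p j) / sqrt (fact (2 * (k j + p j))) / pi powr (1/4))"
    unfolding Cn_def c1_def by (intro prod.cong refl) (simp add: power_add field_simps)
  also have "\<dots> = ((-1) ^ mabs p * 2 ^ mabs p) * ((-1) ^ mabs k * 2 ^ mabs k) * (\<Prod>j\<in>UNIV. beta (k j))
        * mfact (\<lambda>j. k j + p j) / sqrt (mfact (\<lambda>j. 2 * (k j + p j))) / (\<Prod>j\<in>(UNIV::'d set). pi powr (1/4))"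
    by (simp only: mfact_def sqrt_prod power_mabs prod_dividef prod.distrib)
  also have "\<dots> = Kp p * cc k p"
    unfolding Kp_def cc_def pi4 mbinom_beta by (simp add: field_simps)
  finally show ?thesis .
qed




lemma bound_from_ell:
  fixes a :: "('d::finite \<Rightarrow> nat) \<Rightarrow> complex"
  assumes h: "h > 0" and C: "norm (a n) * h ^ mabs n * mfact n powr e \<le> C"
  shows "norm (a n) \<le> C * ((1/h) ^ mabs n / mfact n powr e)"
proof -
  have pos: "h ^ mabs n * mfact n powr e > 0" using h mfact_pos[of n] by simp
  have "norm (a n) \<le> C / (h ^ mabs n * mfact n powr e)"
    using C pos by (simp add: pos_le_divide_eq mult.assoc)
  also have "\<dots> = C * ((1/h) ^ mabs n / mfact n powr e)"
    by (simp add: power_one_over)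
  finally show ?thesis .
qed

lemma summable_bound_complex:
  fixes g :: "'a \<Rightarrow> complex" and w :: "'a \<Rightarrow> real"
  assumes "w summable_on A" "\<And>x. x \<in> A \<Longrightarrow> norm (g x) \<le> w x"
  shows "(\<lambda>x. norm (g x)) summable_on A" "g summable_on A"
proof -
  show n: "(\<lambda>x. norm (g x)) summable_on A"
    by (rule summable_on_comparison_test[OF assms(1)]) (use assms(2) in auto)
  show "g summable_on A" by (rule abs_summable_summable[OF n])
qed

lemma dbl_range:
  fixes k :: "'d \<Rightarrow> nat"
  assumes "\<forall>j. even (k j)"
  shows "k \<in> range (\<lambda>n. (\<lambda>j. 2 * n j))"
proof
  show "k = (\<lambda>j. 2 * (k j div 2))" using assms by auto
qed simp

theorem theorem6p5:
  fixes \<sigma> :: real and f :: "real ^ 'd::finite \<Rightarrow> complex"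
  assumes "\<sigma> > 0" and "f \<in> H_flat_even \<sigma>"
  shows "(\<lambda>x. f (wmap x)) \<in> G_flat \<sigma> \<and>
    (\<exists>b \<in> ell_flat \<sigma>.
       (\<forall>n. (\<lambda>k. complex_of_real
                 (mbinom (\<lambda>j. real (k j) - 3 / 2) k * (-1) ^ mabs k * 2 ^ mabs k
                  * mfact (\<lambda>j. k j + n j) / sqrt (mfact (\<lambda>j. 2 * (k j + n j))))
               * hermite_coeff f (\<lambda>j. 2 * (k j + n j))) summable_on UNIV \<and>
            b n = complex_of_real ((-1) ^ mabs n * 2 ^ mabs n / pi powr (real CARD('d) / 4)) *
              (\<Sum>\<^sub>\<infinity>k. complex_of_real
                 (mbinom (\<lambda>j. real (k j) - 3 / 2) k * (-1) ^ mabs k * 2 ^ mabs k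
                  * mfact (\<lambda>j. k j + n j) / sqrt (mfact (\<lambda>j. 2 * (k j + n j))))
               * hermite_coeff f (\<lambda>j. 2 * (k j + n j)))) \<and>
       (\<forall>x\<in>pos_orthant.
          (\<lambda>n. norm (b n * complex_of_real (laguerre_fun n x))) summable_on UNIV \<and>
          ((\<lambda>n. b n * complex_of_real (laguerre_fun n x)) has_sum f (wmap x)) UNIV))"
proof -
  have sig: "\<sigma> > 0" by (rule assms(1))
  from assms(2) obtain a where aell: "a \<in> ell_flat \<sigma>"
    and hsn: "\<And>x. (\<lambda>n. norm (a n * complex_of_real (hermite_fun n x))) summable_on UNIV"
    and hs: "\<And>x. ((\<lambda>n. a n * complex_of_real (hermite_fun n x)) has_sum f x) UNIV"
    and ev: "\<And>j x. f (\<chi> i. if i = j then - (x $ i) else x $ i) = f x"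
    unfolding H_flat_even_def H_flat_def by blast
  from aell obtain h C where h: "h > 0"
    and C: "\<And>n. norm (a n) * h ^ mabs n * mfact n powr (1 / (2 * \<sigma>)) \<le> C"
    unfolding ell_flat_def by blast
  have C0: "C \<ge> 0"
    using C[of "\<lambda>_. 0"] h mfact_pos[of "\<lambda>_. 0"] by (smt (verit) mult_nonneg_nonneg norm_ge_zero powr_ge_zero zero_le_power)
  define a' where "a' k = (if \<forall>j. even (k j) then a k else 0)" for k :: "'d \<Rightarrow> nat"
  have hs': "((\<lambda>k. a' k * complex_of_real (hermite_fun k x)) has_sum f x) UNIV" for x
    unfolding a'_def by (rule even_reduce[OF hs ev])
  have anorm: "(\<lambda>k. norm (a k)) summable_on UNIV"
  proof (rule summable_on_comparison_test)
    show "(\<lambda>k. C * ((1/h) ^ mabs k / mfact k powr (1 / (2 * \<sigma>)))) summable_on UNIV"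
      by (intro summable_on_cmult_right multi_summable) (use sig h in auto)
    show "norm (a k) \<le> C * ((1/h) ^ mabs k / mfact k powr (1 / (2 * \<sigma>)))" for k
      by (rule bound_from_ell[OF h C])
  qed auto
  have a'norm: "(\<lambda>k. norm (a' k)) summable_on UNIV"
    by (rule summable_on_comparison_test[OF anorm]) (auto simp: a'_def)
  have hsn': "(\<lambda>k. norm (a' k * complex_of_real (hermite_fun k x))) summable_on UNIV" for x
    by (rule summable_on_comparison_test[OF hsn[of x]]) (auto simp: a'_def)
  have coef: "hermite_coeff f n = a' n" for n
    by (rule coeff_ident[OF hs' hsn' a'norm])
  have coef2: "hermite_coeff f (\<lambda>j. 2 * (k j + p j)) = a (\<lambda>j. 2 * (k j + p j))" for k p
    unfolding coef a'_def by simp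
  define \<epsilon> where "\<epsilon> = 1 / \<sigma>"
  define \<rho> where "\<rho> = 1 / h\<^sup>2"
  have eps: "\<epsilon> > 0" unfolding \<epsilon>_def using sig by simp
  have rho: "\<rho> > 0" unfolding \<rho>_def using h by simp
  define w where "w k = (2 * \<rho>) ^ mabs k / mfact k powr \<epsilon>" for k :: "'d \<Rightarrow> nat"
  have wsum: "w summable_on UNIV" unfolding w_def by (rule multi_summable) (use eps rho in auto)
  have wnn: "w k \<ge> 0" for k unfolding w_def using rho by simp
  define B where "B p = C * (\<rho> ^ mabs p / mfact p powr \<epsilon>)" for p :: "'d \<Rightarrow> nat"
  have decay: "norm (a (\<lambda>j. 2 * (k j + p j))) \<le> C * (\<rho> ^ mabs k / mfact k powr \<epsilon>) * (\<rho> ^ mabs p / mfact p powr \<epsilon>)" for k p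
    unfolding \<rho>_def \<epsilon>_def by (rule decay_bound[OF h sig C])
  define tm where "tm p k = complex_of_real (cc k p) * hermite_coeff f (\<lambda>j. 2 * (k j + p j))" for p k
  have tm_bound: "norm (tm p k) \<le> B p * w k" for p k
  proof -
    have "norm (tm p k) = \<bar>cc k p\<bar> * norm (a (\<lambda>j. 2 * (k j + p j)))"
      unfolding tm_def coef2 by (simp add: norm_mult)
    also have "\<dots> \<le> 2 ^ mabs k * (C * (\<rho> ^ mabs k / mfact k powr \<epsilon>) * (\<rho> ^ mabs p / mfact p powr \<epsilon>))"
      by (intro mult_mono cc_bound decay) auto
    also have "\<dots> = B p * w k"
      unfolding B_def w_def by (simp add: power_mult_distrib mult_ac)
    finally show ?thesis .
  qed
  have Bnn: "B p \<ge> 0" for p unfolding B_def using C0 rho by simp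
  have tm_sum: "tm p summable_on UNIV" and tm_nsum: "(\<lambda>k. norm (tm p k)) summable_on UNIV" for p
  proof -
    have ws: "(\<lambda>k. B p * w k) summable_on UNIV" by (rule summable_on_cmult_right[OF wsum])
    show "tm p summable_on UNIV" "(\<lambda>k. norm (tm p k)) summable_on UNIV"
      using summable_bound_complex[OF ws tm_bound] by auto
  qed
  define V where "V = infsum w UNIV"
  define b where "b p = complex_of_real (Kp p) * infsum (tm p) UNIV" for p
  have bnorm: "norm (b p) \<le> C * V * ((2 * \<rho>) ^ mabs p / mfact p powr \<epsilon>)" for p
  proof -
    have "norm (infsum (tm p) UNIV) \<le> infsum (\<lambda>k. norm (tm p k)) UNIV"
      by (rule norm_infsum_bound[OF tm_nsum])
    also have "\<dots> \<le> infsum (\<lambda>k. B p * w k) UNIV"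
      by (rule infsum_mono[OF tm_nsum summable_on_cmult_right[OF wsum] tm_bound])
    also have "\<dots> = B p * V" unfolding V_def by (rule infsum_cmult_right[OF wsum])
    finally have i: "norm (infsum (tm p) UNIV) \<le> B p * V" .
    have "norm (b p) = \<bar>Kp p\<bar> * norm (infsum (tm p) UNIV)"
      unfolding b_def by (simp add: norm_mult)
    also have "\<dots> \<le> 2 ^ mabs p * (B p * V)"
      by (intro mult_mono Kp_bound i) auto
    also have "\<dots> = C * V * ((2 * \<rho>) ^ mabs p / mfact p powr \<epsilon>)"
      unfolding B_def by (simp add: power_mult_distrib)
    finally show ?thesis .
  qed
  have V0: "V \<ge> 0" unfolding V_def by (rule infsum_nonneg) (simp add: wnn)
  have bell2: "b \<in> ell_flat (\<sigma> / 2)"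
    unfolding ell_flat_def
  proof (intro CollectI exI conjI allI)
    show "1 / (2 * \<rho>) > 0" using rho by simp
    fix p :: "'d \<Rightarrow> nat"
    have e: "1 / (2 * (\<sigma> / 2)) = \<epsilon>" unfolding \<epsilon>_def by simp
    have "norm (b p) * (1 / (2 * \<rho>)) ^ mabs p * mfact p powr \<epsilon>
        \<le> C * V * ((2 * \<rho>) ^ mabs p / mfact p powr \<epsilon>) * (1 / (2 * \<rho>)) ^ mabs p * mfact p powr \<epsilon>"
      using bnorm[of p] rho by (intro mult_right_mono) auto
    also have "\<dots> = C * V"
      using rho mfact_pos[of p] by (simp add: power_one_over field_simps)
    finally show "norm (b p) * (1 / (2 * \<rho>)) ^ mabs p * mfact p powr (1 / (2 * (\<sigma> / 2))) \<le> C * V"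
      unfolding e .
  qed
  have bell: "b \<in> ell_flat \<sigma>"
  proof -
    obtain hb Cb where hb: "hb > 0" and Cb: "\<And>p. norm (b p) * hb ^ mabs p * mfact p powr (1 / (2 * (\<sigma> / 2))) \<le> Cb"
      using bell2 unfolding ell_flat_def by blast
    show ?thesis unfolding ell_flat_def
    proof (intro CollectI exI conjI allI)
      show "hb > 0" by (rule hb)
      fix p :: "'d \<Rightarrow> nat"
      have "mfact p powr (1 / (2 * \<sigma>)) \<le> mfact p powr (1 / (2 * (\<sigma> / 2)))"
        using sig mfact_ge1[of p] by (intro powr_mono) (auto simp: field_simps)
      then have "norm (b p) * hb ^ mabs p * mfact p powr (1 / (2 * \<sigma>)) \<le> norm (b p) * hb ^ mabs p * mfact p powr (1 / (2 * (\<sigma> / 2)))"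
        using hb by (intro mult_left_mono) auto
      also have "\<dots> \<le> Cb" by (rule Cb)
      finally show "norm (b p) * hb ^ mabs p * mfact p powr (1 / (2 * \<sigma>)) \<le> Cb" .
    qed
  qed
  have lag: "(\<lambda>n. norm (b n * complex_of_real (laguerre_fun n x))) summable_on UNIV \<and>
      ((\<lambda>n. b n * complex_of_real (laguerre_fun n x)) has_sum f (wmap x)) UNIV"
    if x: "x \<in> pos_orthant" for x
  proof -
    define T where "T = 1 + (\<Sum>j\<in>UNIV. x $ j)"
    have "0 \<le> (\<Sum>j\<in>UNIV. x $ j)"
      using x by (intro sum_nonneg) (auto simp: pos_orthant_def less_imp_le)
    then have T1: "T \<ge> 1" unfolding T_def by simp
    define L where "L p = complex_of_real (laguerre_fun p x)" for p :: "'d \<Rightarrow> nat"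
    have Lb: "norm (L p) \<le> T ^ mabs p" for p
      unfolding L_def T_def using laguerre_fun_bound[OF x] by simp
    define u where "u p = C * V * ((2 * \<rho> * T) ^ mabs p / mfact p powr \<epsilon>)" for p :: "'d \<Rightarrow> nat"
    have usum: "u summable_on UNIV"
      unfolding u_def by (intro summable_on_cmult_right multi_summable) (use eps rho T1 in auto)
    have ub: "norm (b p * L p) \<le> u p" for p
    proof -
      have "norm (b p * L p) \<le> C * V * ((2 * \<rho>) ^ mabs p / mfact p powr \<epsilon>) * T ^ mabs p"
        unfolding norm_mult by (intro mult_mono bnorm Lb) (use C0 V0 rho mfact_pos[of p] in auto)
      also have "\<dots> = u p" unfolding u_def by (simp add: power_mult_distrib)
      finally show ?thesis .
    qed
    have part1: "(\<lambda>n. norm (b n * L n)) summable_on UNIV"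
      using summable_bound_complex[OF usum ub] by auto
    define H where "H z = (case z of (p, k) \<Rightarrow> tm p k * (complex_of_real (Kp p) * L p))" for z
    define u2 where "u2 p = C * ((2 * \<rho> * T) ^ mabs p / mfact p powr \<epsilon>)" for p :: "'d \<Rightarrow> nat"
    have u2sum: "u2 summable_on UNIV"
      unfolding u2_def by (intro summable_on_cmult_right multi_summable) (use eps rho T1 in auto)
    have Hb: "norm (H z) \<le> (case z of (p, k) \<Rightarrow> u2 p * w k)" for z
    proof (cases z)
      case (Pair p k)
      have "norm (H z) = norm (tm p k) * (\<bar>Kp p\<bar> * norm (L p))"
        unfolding H_def Pair by (simp add: norm_mult)
      also have "\<dots> \<le> (B p * w k) * (2 ^ mabs p * T ^ mabs p)"
        by (intro mult_mono tm_bound Kp_bound Lb) (auto intro: mult_nonneg_nonneg Bnn wnn)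
      also have "\<dots> = u2 p * w k"
        unfolding B_def u2_def by (simp add: power_mult_distrib field_simps)
      finally show ?thesis using Pair by simp
    qed
    have pairsum: "(\<lambda>(p, k). u2 p * w k) summable_on UNIV \<times> UNIV"
      by (rule summable_on_pair_nonneg[OF _ wnn u2sum wsum]) (use C0 rho T1 in \<open>simp add: u2_def\<close>)
    have Hsum: "H summable_on UNIV \<times> UNIV"
      using summable_bound_complex(2)[OF pairsum Hb] by simp
    define S where "S = infsum H (UNIV \<times> UNIV)"
    have HS: "(H has_sum S) (Sigma UNIV (\<lambda>_. UNIV))"
      unfolding S_def using Hsum by simp
    have fib1: "((\<lambda>k. H (p, k)) has_sum (b p * L p)) UNIV" for p
    proof -
      have "((\<lambda>k. tm p k * (complex_of_real (Kp p) * L p)) has_sum (infsum (tm p) UNIV * (complex_of_real (Kp p) * L p))) UNIV"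
        by (rule has_sum_cmult_left[OF has_sum_infsum[OF tm_sum]])
      then show ?thesis unfolding H_def b_def by (simp add: mult_ac)
    qed
    have bS: "((\<lambda>p. b p * L p) has_sum S) UNIV"
      by (rule has_sum_SigmaD[OF HS]) (use fib1 in simp)
    define Box where "Box n = PiE UNIV (\<lambda>j. {..n j})" for n :: "'d \<Rightarrow> nat"
    define Phi where "Phi z = (case z of (p, k) \<Rightarrow> ((\<lambda>j. k j + p j), p))" for z :: "('d \<Rightarrow> nat) \<times> ('d \<Rightarrow> nat)"
    define Psi where "Psi z = (case z of (n, p) \<Rightarrow> (p, (\<lambda>j. n j - p j)))" for z :: "('d \<Rightarrow> nat) \<times> ('d \<Rightarrow> nat)"
    have bij: "bij_betw Phi (UNIV \<times> UNIV) (Sigma UNIV Box)"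
    proof (rule bij_betwI[where g = Psi])
      show "Phi \<in> UNIV \<times> UNIV \<rightarrow> Sigma UNIV Box"
        by (auto simp: Phi_def Box_def PiE_iff)
      show "Psi \<in> Sigma UNIV Box \<rightarrow> UNIV \<times> UNIV" by auto
      show "Psi (Phi z) = z" if "z \<in> UNIV \<times> UNIV" for z
        by (cases z) (auto simp: Phi_def Psi_def)
      show "Phi (Psi z) = z" if "z \<in> Sigma UNIV Box" for z
        using that by (cases z) (auto simp: Phi_def Psi_def Box_def PiE_iff fun_eq_iff)
    qed
    define Gf where "Gf z = (case z of (n, p) \<Rightarrow> complex_of_real (Cn n p) * a (\<lambda>j. 2 * n j) * L p)" for z
    have GH: "Gf (Phi z) = H z" for z
    proof (cases z)
      case (Pair p k)
      show ?thesis unfolding Pair Gf_def Phi_def H_def tm_def coef2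
        by (simp add: Cn_shift mult_ac)
    qed
    have GS: "(Gf has_sum S) (Sigma UNIV Box)"
      using has_sum_reindex_bij_betw[OF bij, of Gf S] HS GH by simp
    have fib2: "((\<lambda>p. Gf (n, p)) has_sum (a (\<lambda>j. 2 * n j) * complex_of_real (hermite_fun (\<lambda>j. 2 * n j) (wmap x)))) (Box n)" for n
    proof -
      have fin: "finite (Box n)" unfolding Box_def by (intro finite_PiE) auto
      have "(\<Sum>p\<in>Box n. Gf (n, p)) = a (\<lambda>j. 2 * n j) * complex_of_real (\<Sum>p\<in>Box n. Cn n p * laguerre_fun p x)"
        unfolding Gf_def L_def by (simp add: sum_distrib_left mult_ac)
      also have "\<dots> = a (\<lambda>j. 2 * n j) * complex_of_real (hermite_fun (\<lambda>j. 2 * n j) (wmap x))"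
        unfolding Box_def hermite_expand[OF x] ..
      finally show ?thesis using has_sum_finite[OF fin, of "\<lambda>p. Gf (n, p)"] by simp
    qed
    have S1: "((\<lambda>n. a (\<lambda>j. 2 * n j) * complex_of_real (hermite_fun (\<lambda>j. 2 * n j) (wmap x))) has_sum S) UNIV"
      by (rule has_sum_SigmaD[OF GS]) (use fib2 in simp)
    define dbl where "dbl n = (\<lambda>j. 2 * n j)" for n :: "'d \<Rightarrow> nat"
    have injd: "inj dbl" unfolding dbl_def by (auto simp: inj_def fun_eq_iff)
    have "((\<lambda>k. a' k * complex_of_real (hermite_fun k (wmap x))) has_sum f (wmap x)) (range dbl)"
    proof (subst has_sum_cong_neutral[where T = UNIV and g = "\<lambda>k. a' k * complex_of_real (hermite_fun k (wmap x))"])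
      show "a' k * complex_of_real (hermite_fun k (wmap x)) = 0" if "k \<in> UNIV - range dbl" for k
        using that dbl_range[of k] unfolding a'_def dbl_def by auto
    qed (use hs'[of "wmap x"] in auto)
    then have "(((\<lambda>k. a' k * complex_of_real (hermite_fun k (wmap x))) \<circ> dbl) has_sum f (wmap x)) UNIV"
      by (subst has_sum_reindex[OF inj_on_subset[OF injd subset_UNIV], symmetric])
    then have S2: "((\<lambda>n. a (\<lambda>j. 2 * n j) * complex_of_real (hermite_fun (\<lambda>j. 2 * n j) (wmap x))) has_sum f (wmap x)) UNIV"
      unfolding dbl_def a'_def by (simp add: o_def)
    have "S = f (wmap x)" by (rule has_sum_unique[OF S1 S2])
    then show ?thesis using part1 bS unfolding L_def by simp
  qed
  have part_b: "\<forall>n. tm n summable_on UNIV \<and>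
      b n = complex_of_real ((-1) ^ mabs n * 2 ^ mabs n / pi powr (real CARD('d) / 4)) * infsum (tm n) UNIV"
    using tm_sum unfolding b_def Kp_def by simp
  show ?thesis
  proof (intro conjI bexI[of _ b])
    show "(\<lambda>x. f (wmap x)) \<in> G_flat \<sigma>"
      unfolding G_flat_def using bell2 lag by blast
    show "b \<in> ell_flat \<sigma>" by (rule bell)
    show "\<forall>x\<in>pos_orthant. (\<lambda>n. norm (b n * complex_of_real (laguerre_fun n x))) summable_on UNIV \<and>
          ((\<lambda>n. b n * complex_of_real (laguerre_fun n x)) has_sum f (wmap x)) UNIV"
      using lag by blast
    show "\<forall>n. (\<lambda>k. complex_of_real
                 (mbinom (\<lambda>j. real (k j) - 3 / 2) k * (-1) ^ mabs k * 2 ^ mabs k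
                  * mfact (\<lambda>j. k j + n j) / sqrt (mfact (\<lambda>j. 2 * (k j + n j))))
               * hermite_coeff f (\<lambda>j. 2 * (k j + n j))) summable_on UNIV \<and>
            b n = complex_of_real ((-1) ^ mabs n * 2 ^ mabs n / pi powr (real CARD('d) / 4)) *
              (\<Sum>\<^sub>\<infinity>k. complex_of_real
                 (mbinom (\<lambda>j. real (k j) - 3 / 2) k * (-1) ^ mabs k * 2 ^ mabs k
                  * mfact (\<lambda>j. k j + n j) / sqrt (mfact (\<lambda>j. 2 * (k j + n j))))
               * hermite_coeff f (\<lambda>j. 2 * (k j + n j)))"
      using part_b unfolding tm_def cc_def .
  qed
qed


end
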